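(* Let $(M^7,\varphi)$ be a manifold with a $\mathrm{G}_2$-structure and $\zeta=(1,0)$ the associated unit spinor. Then for every vector field $X$, $(X\lrcorner\varphi)\cdot\zeta=3X\cdot\zeta$; and for every $\gamma\in\Omega^3_{27}$, written as $\gamma_{ijk}=h_{ip}\varphi_{pjk}+h_{jp}\varphi_{ipk}+h_{kp}\varphi_{ijp}$ for a traceless symmetric 2-tensor $h$, one has $(X\lrcorner\gamma)\cdot\zeta=2h(X)\cdot\zeta$ and $(X\lrcorner\ast\gamma)\cdot\zeta=-2h(X)\cdot\zeta$.
   Context: The spinor bundle is identified with $\underline{\mathbb{R}}\oplus TM$, $\zeta=(1,0)$, with Clifford multiplication of a vector $Y$ on a spinor $(f,Z)$ given by $Y\cdot(f,Z)=(-\langle Y,Z\rangle,\,fY+Y\times Z)$, where $Y\times Z=(\varphi(Y,Z,\cdot))^\sharp$ (using the metric induced by $\varphi$). For a $k$-form $\epsilon$ and local orthonormal frame $e_i$, $\epsilon\cdot(f,Z)=\frac1{k!}\epsilon_{i_1\dots i_k}e_{i_1}\cdot(e_{i_2}\cdot(\cdots(e_{i_k}\cdot(f,Z))\cdots))$. $\Omega^3_{27}$ is the 27-dimensional irreducible $\mathrm{G}_2$-summand of 3-forms, whose elements are exactly those of the form above with $h$ traceless symmetric; indices are in an orthonormal frame, repeated indices summed; $\ast$ is the Hodge star of the induced metric and orientation. *)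

theory Defs
  imports "HOL-Analysis.Analysis" "HOL-Library.Numeral_Type"
begin

text \<open>Pointwise (tangent space) model of a G2-structure. The tangent space at a point
is identified with real^7 via an orthonormal frame e_i (standard basis); all tensors are
given by their components in this frame.\<close>

type_synonym vec7 = "real^7"
type_synonym form2 = "7 \<Rightarrow> 7 \<Rightarrow> real"
type_synonym form3 = "7 \<Rightarrow> 7 \<Rightarrow> 7 \<Rightarrow> real"
type_synonym form4 = "7 \<Rightarrow> 7 \<Rightarrow> 7 \<Rightarrow> 7 \<Rightarrow> real"
type_synonym spinor = "real \<times> (real^7)"

text \<open>Components of the elementary antisymmetrised 3-form e^{abc}.\<close>
definition alt3 :: "7 \<Rightarrow> 7 \<Rightarrow> 7 \<Rightarrow> 7 \<Rightarrow> 7 \<Rightarrow> 7 \<Rightarrow> real" where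
  "alt3 a b c i j k =
     (if (i,j,k) = (a,b,c) then 1 else 0) + (if (i,j,k) = (b,c,a) then 1 else 0)
   + (if (i,j,k) = (c,a,b) then 1 else 0) - (if (i,j,k) = (b,a,c) then 1 else 0)
   - (if (i,j,k) = (a,c,b) then 1 else 0) - (if (i,j,k) = (c,b,a) then 1 else 0)"

text \<open>The standard G2 3-form
  phi0 = e123 + e145 + e167 + e246 - e257 - e347 - e356
  (indices 1..7 represented by 0..6 in the type 7); its induced metric is the
  standard one and its induced orientation is e1 ^ ... ^ e7.\<close>
definition phi0 :: form3 where
  "phi0 i j k =
     alt3 0 1 2 i j k + alt3 0 3 4 i j k + alt3 0 5 6 i j k + alt3 1 3 5 i j k
   - alt3 1 4 6 i j k - alt3 2 3 6 i j k - alt3 2 4 5 i j k"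

text \<open>A G2-structure at a point, in components w.r.t. an arbitrary orthonormal frame
(for the metric induced by phi): phi is the pullback of phi0 under an orthogonal map R,
phi(x,y,z) = phi0(Rx,Ry,Rz). The orientation induced by phi is then (det R) times the
orientation of the frame.\<close>
definition pull3 :: "real^7^7 \<Rightarrow> form3 \<Rightarrow> form3" where
  "pull3 R w i j k = (\<Sum>a\<in>UNIV. \<Sum>b\<in>UNIV. \<Sum>c\<in>UNIV. R$a$i * R$b$j * R$c$k * w a b c)"

definition levi7 :: "(7 \<Rightarrow> 7) \<Rightarrow> real" where
  "levi7 I = det (\<chi> r. axis (I r) (1::real))"

definition idx7 :: "7 \<Rightarrow> 7 \<Rightarrow> 7 \<Rightarrow> 7 \<Rightarrow> 7 \<Rightarrow> 7 \<Rightarrow> 7 \<Rightarrow> 7 \<Rightarrow> 7" where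
  "idx7 i j k a b c d r =
     (if r = 0 then i else if r = 1 then j else if r = 2 then k else if r = 3 then a
      else if r = 4 then b else if r = 5 then c else d)"

text \<open>Hodge star of a 3-form, with orientation sign ori (ori = 1 when the frame is
positively oriented): ( *g)_{abcd} = 1/3! o eps_{ijkabcd} g_{ijk}.\<close>
definition hodge3 :: "real \<Rightarrow> form3 \<Rightarrow> form4" where
  "hodge3 ori g a b c d =
     (1/6) * (\<Sum>i\<in>UNIV. \<Sum>j\<in>UNIV. \<Sum>k\<in>UNIV. ori * levi7 (idx7 i j k a b c d) * g i j k)"

definition contr3 :: "vec7 \<Rightarrow> form3 \<Rightarrow> form2" where
  "contr3 X g j k = (\<Sum>i\<in>UNIV. X$i * g i j k)"

definition contr4 :: "vec7 \<Rightarrow> form4 \<Rightarrow> form3" where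
  "contr4 X g j k l = (\<Sum>i\<in>UNIV. X$i * g i j k l)"

definition cross7 :: "form3 \<Rightarrow> vec7 \<Rightarrow> vec7 \<Rightarrow> vec7" where
  "cross7 phi Y Z = (\<chi> k. \<Sum>i\<in>UNIV. \<Sum>j\<in>UNIV. phi i j k * Y$i * Z$j)"

text \<open>Clifford multiplication Y.(f,Z) = (-<Y,Z>, fY + Y x Z) on R + TM.\<close>
definition cliff :: "form3 \<Rightarrow> vec7 \<Rightarrow> spinor \<Rightarrow> spinor" where
  "cliff phi Y s = (- (Y \<bullet> snd s), fst s *\<^sub>R Y + cross7 phi Y (snd s))"

definition e7 :: "7 \<Rightarrow> vec7" where
  "e7 i = axis i 1"

definition act2 :: "form3 \<Rightarrow> form2 \<Rightarrow> spinor \<Rightarrow> spinor" where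
  "act2 phi w s = (1/2) *\<^sub>R (\<Sum>i\<in>UNIV. \<Sum>j\<in>UNIV.
      w i j *\<^sub>R cliff phi (e7 i) (cliff phi (e7 j) s))"

definition act3 :: "form3 \<Rightarrow> form3 \<Rightarrow> spinor \<Rightarrow> spinor" where
  "act3 phi w s = (1/6) *\<^sub>R (\<Sum>i\<in>UNIV. \<Sum>j\<in>UNIV. \<Sum>k\<in>UNIV.
      w i j k *\<^sub>R cliff phi (e7 i) (cliff phi (e7 j) (cliff phi (e7 k) s)))"

definition gamma_of :: "form3 \<Rightarrow> (7 \<Rightarrow> 7 \<Rightarrow> real) \<Rightarrow> form3" where
  "gamma_of phi h i j k = (\<Sum>p\<in>UNIV. h i p * phi p j k + h j p * phi i p k + h k p * phi i j p)"

definition apply_h :: "(7 \<Rightarrow> 7 \<Rightarrow> real) \<Rightarrow> vec7 \<Rightarrow> vec7" where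
  "apply_h h X = (\<chi> i. \<Sum>j\<in>UNIV. h i j * X$j)"

definition zeta :: spinor where "zeta = (1, 0)"

end

theory Submission
  imports Defs "HOL-Combinatorics.Transposition"
begin

lemma exhaust_7:
  fixes x :: 7
  shows "x = 0 \<or> x = 1 \<or> x = 2 \<or> x = 3 \<or> x = 4 \<or> x = 5 \<or> x = 6"
proof (induct x)
  case (of_int z)
  then have "z = 0 \<or> z = 1 \<or> z = 2 \<or> z = 3 \<or> z = 4 \<or> z = 5 \<or> z = 6" by fastforce
  then show ?case by auto
qed
lemma UNIV_7: "(UNIV::7 set) = {0,1,2,3,4,5,6}" using exhaust_7 by auto
lemma forall_7: "(\<forall>i::7. P i) \<longleftrightarrow> P 0 \<and> P 1 \<and> P 2 \<and> P 3 \<and> P 4 \<and> P 5 \<and> P 6"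
  by (metis exhaust_7)
lemma sum_7: "sum f (UNIV::7 set) = f 0 + f 1 + f 2 + f 3 + f 4 + f 5 + f 6"
  unfolding UNIV_7 by (simp add: ac_simps)

lemma P_tab [simp]:
  "phi0 0 0 0 = 0"
  "phi0 0 0 1 = 0"
  "phi0 0 0 2 = 0"
  "phi0 0 0 3 = 0"
  "phi0 0 0 4 = 0"
  "phi0 0 0 5 = 0"
  "phi0 0 0 6 = 0"
  "phi0 0 1 0 = 0"
  "phi0 0 1 1 = 0"
  "phi0 0 1 2 = 1"
  "phi0 0 1 3 = 0"
  "phi0 0 1 4 = 0"
  "phi0 0 1 5 = 0"
  "phi0 0 1 6 = 0"
  "phi0 0 2 0 = 0"
  "phi0 0 2 1 = -1"
  "phi0 0 2 2 = 0"
  "phi0 0 2 3 = 0"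
  "phi0 0 2 4 = 0"
  "phi0 0 2 5 = 0"
  "phi0 0 2 6 = 0"
  "phi0 0 3 0 = 0"
  "phi0 0 3 1 = 0"
  "phi0 0 3 2 = 0"
  "phi0 0 3 3 = 0"
  "phi0 0 3 4 = 1"
  "phi0 0 3 5 = 0"
  "phi0 0 3 6 = 0"
  "phi0 0 4 0 = 0"
  "phi0 0 4 1 = 0"
  "phi0 0 4 2 = 0"
  "phi0 0 4 3 = -1"
  "phi0 0 4 4 = 0"
  "phi0 0 4 5 = 0"
  "phi0 0 4 6 = 0"
  "phi0 0 5 0 = 0"
  "phi0 0 5 1 = 0"
  "phi0 0 5 2 = 0"
  "phi0 0 5 3 = 0"
  "phi0 0 5 4 = 0"
  "phi0 0 5 5 = 0"
  "phi0 0 5 6 = 1"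
  "phi0 0 6 0 = 0"
  "phi0 0 6 1 = 0"
  "phi0 0 6 2 = 0"
  "phi0 0 6 3 = 0"
  "phi0 0 6 4 = 0"
  "phi0 0 6 5 = -1"
  "phi0 0 6 6 = 0"
  "phi0 1 0 0 = 0"
  "phi0 1 0 1 = 0"
  "phi0 1 0 2 = -1"
  "phi0 1 0 3 = 0"
  "phi0 1 0 4 = 0"
  "phi0 1 0 5 = 0"
  "phi0 1 0 6 = 0"
  "phi0 1 1 0 = 0"
  "phi0 1 1 1 = 0"
  "phi0 1 1 2 = 0"
  "phi0 1 1 3 = 0"
  "phi0 1 1 4 = 0"
  "phi0 1 1 5 = 0"
  "phi0 1 1 6 = 0"
  "phi0 1 2 0 = 1"
  "phi0 1 2 1 = 0"
  "phi0 1 2 2 = 0"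
  "phi0 1 2 3 = 0"
  "phi0 1 2 4 = 0"
  "phi0 1 2 5 = 0"
  "phi0 1 2 6 = 0"
  "phi0 1 3 0 = 0"
  "phi0 1 3 1 = 0"
  "phi0 1 3 2 = 0"
  "phi0 1 3 3 = 0"
  "phi0 1 3 4 = 0"
  "phi0 1 3 5 = 1"
  "phi0 1 3 6 = 0"
  "phi0 1 4 0 = 0"
  "phi0 1 4 1 = 0"
  "phi0 1 4 2 = 0"
  "phi0 1 4 3 = 0"
  "phi0 1 4 4 = 0"
  "phi0 1 4 5 = 0"
  "phi0 1 4 6 = -1"
  "phi0 1 5 0 = 0"
  "phi0 1 5 1 = 0"
  "phi0 1 5 2 = 0"
  "phi0 1 5 3 = -1"
  "phi0 1 5 4 = 0"
  "phi0 1 5 5 = 0"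
  "phi0 1 5 6 = 0"
  "phi0 1 6 0 = 0"
  "phi0 1 6 1 = 0"
  "phi0 1 6 2 = 0"
  "phi0 1 6 3 = 0"
  "phi0 1 6 4 = 1"
  "phi0 1 6 5 = 0"
  "phi0 1 6 6 = 0"
  "phi0 2 0 0 = 0"
  "phi0 2 0 1 = 1"
  "phi0 2 0 2 = 0"
  "phi0 2 0 3 = 0"
  "phi0 2 0 4 = 0"
  "phi0 2 0 5 = 0"
  "phi0 2 0 6 = 0"
  "phi0 2 1 0 = -1"
  "phi0 2 1 1 = 0"
  "phi0 2 1 2 = 0"
  "phi0 2 1 3 = 0"
  "phi0 2 1 4 = 0"
  "phi0 2 1 5 = 0"
  "phi0 2 1 6 = 0"
  "phi0 2 2 0 = 0"
  "phi0 2 2 1 = 0"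
  "phi0 2 2 2 = 0"
  "phi0 2 2 3 = 0"
  "phi0 2 2 4 = 0"
  "phi0 2 2 5 = 0"
  "phi0 2 2 6 = 0"
  "phi0 2 3 0 = 0"
  "phi0 2 3 1 = 0"
  "phi0 2 3 2 = 0"
  "phi0 2 3 3 = 0"
  "phi0 2 3 4 = 0"
  "phi0 2 3 5 = 0"
  "phi0 2 3 6 = -1"
  "phi0 2 4 0 = 0"
  "phi0 2 4 1 = 0"
  "phi0 2 4 2 = 0"
  "phi0 2 4 3 = 0"
  "phi0 2 4 4 = 0"
  "phi0 2 4 5 = -1"
  "phi0 2 4 6 = 0"
  "phi0 2 5 0 = 0"
  "phi0 2 5 1 = 0"
  "phi0 2 5 2 = 0"
  "phi0 2 5 3 = 0"
  "phi0 2 5 4 = 1"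
  "phi0 2 5 5 = 0"
  "phi0 2 5 6 = 0"
  "phi0 2 6 0 = 0"
  "phi0 2 6 1 = 0"
  "phi0 2 6 2 = 0"
  "phi0 2 6 3 = 1"
  "phi0 2 6 4 = 0"
  "phi0 2 6 5 = 0"
  "phi0 2 6 6 = 0"
  "phi0 3 0 0 = 0"
  "phi0 3 0 1 = 0"
  "phi0 3 0 2 = 0"
  "phi0 3 0 3 = 0"
  "phi0 3 0 4 = -1"
  "phi0 3 0 5 = 0"
  "phi0 3 0 6 = 0"
  "phi0 3 1 0 = 0"
  "phi0 3 1 1 = 0"
  "phi0 3 1 2 = 0"
  "phi0 3 1 3 = 0"
  "phi0 3 1 4 = 0"
  "phi0 3 1 5 = -1"
  "phi0 3 1 6 = 0"
  "phi0 3 2 0 = 0"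
  "phi0 3 2 1 = 0"
  "phi0 3 2 2 = 0"
  "phi0 3 2 3 = 0"
  "phi0 3 2 4 = 0"
  "phi0 3 2 5 = 0"
  "phi0 3 2 6 = 1"
  "phi0 3 3 0 = 0"
  "phi0 3 3 1 = 0"
  "phi0 3 3 2 = 0"
  "phi0 3 3 3 = 0"
  "phi0 3 3 4 = 0"
  "phi0 3 3 5 = 0"
  "phi0 3 3 6 = 0"
  "phi0 3 4 0 = 1"
  "phi0 3 4 1 = 0"
  "phi0 3 4 2 = 0"
  "phi0 3 4 3 = 0"
  "phi0 3 4 4 = 0"
  "phi0 3 4 5 = 0"
  "phi0 3 4 6 = 0"
  "phi0 3 5 0 = 0"
  "phi0 3 5 1 = 1"
  "phi0 3 5 2 = 0"
  "phi0 3 5 3 = 0"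
  "phi0 3 5 4 = 0"
  "phi0 3 5 5 = 0"
  "phi0 3 5 6 = 0"
  "phi0 3 6 0 = 0"
  "phi0 3 6 1 = 0"
  "phi0 3 6 2 = -1"
  "phi0 3 6 3 = 0"
  "phi0 3 6 4 = 0"
  "phi0 3 6 5 = 0"
  "phi0 3 6 6 = 0"
  "phi0 4 0 0 = 0"
  "phi0 4 0 1 = 0"
  "phi0 4 0 2 = 0"
  "phi0 4 0 3 = 1"
  "phi0 4 0 4 = 0"
  "phi0 4 0 5 = 0"
  "phi0 4 0 6 = 0"
  "phi0 4 1 0 = 0"
  "phi0 4 1 1 = 0"
  "phi0 4 1 2 = 0"
  "phi0 4 1 3 = 0"
  "phi0 4 1 4 = 0"
  "phi0 4 1 5 = 0"
  "phi0 4 1 6 = 1"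
  "phi0 4 2 0 = 0"
  "phi0 4 2 1 = 0"
  "phi0 4 2 2 = 0"
  "phi0 4 2 3 = 0"
  "phi0 4 2 4 = 0"
  "phi0 4 2 5 = 1"
  "phi0 4 2 6 = 0"
  "phi0 4 3 0 = -1"
  "phi0 4 3 1 = 0"
  "phi0 4 3 2 = 0"
  "phi0 4 3 3 = 0"
  "phi0 4 3 4 = 0"
  "phi0 4 3 5 = 0"
  "phi0 4 3 6 = 0"
  "phi0 4 4 0 = 0"
  "phi0 4 4 1 = 0"
  "phi0 4 4 2 = 0"
  "phi0 4 4 3 = 0"
  "phi0 4 4 4 = 0"
  "phi0 4 4 5 = 0"
  "phi0 4 4 6 = 0"
  "phi0 4 5 0 = 0"
  "phi0 4 5 1 = 0"
  "phi0 4 5 2 = -1"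
  "phi0 4 5 3 = 0"
  "phi0 4 5 4 = 0"
  "phi0 4 5 5 = 0"
  "phi0 4 5 6 = 0"
  "phi0 4 6 0 = 0"
  "phi0 4 6 1 = -1"
  "phi0 4 6 2 = 0"
  "phi0 4 6 3 = 0"
  "phi0 4 6 4 = 0"
  "phi0 4 6 5 = 0"
  "phi0 4 6 6 = 0"
  "phi0 5 0 0 = 0"
  "phi0 5 0 1 = 0"
  "phi0 5 0 2 = 0"
  "phi0 5 0 3 = 0"
  "phi0 5 0 4 = 0"
  "phi0 5 0 5 = 0"
  "phi0 5 0 6 = -1"
  "phi0 5 1 0 = 0"
  "phi0 5 1 1 = 0"
  "phi0 5 1 2 = 0"
  "phi0 5 1 3 = 1"
  "phi0 5 1 4 = 0"
  "phi0 5 1 5 = 0"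
  "phi0 5 1 6 = 0"
  "phi0 5 2 0 = 0"
  "phi0 5 2 1 = 0"
  "phi0 5 2 2 = 0"
  "phi0 5 2 3 = 0"
  "phi0 5 2 4 = -1"
  "phi0 5 2 5 = 0"
  "phi0 5 2 6 = 0"
  "phi0 5 3 0 = 0"
  "phi0 5 3 1 = -1"
  "phi0 5 3 2 = 0"
  "phi0 5 3 3 = 0"
  "phi0 5 3 4 = 0"
  "phi0 5 3 5 = 0"
  "phi0 5 3 6 = 0"
  "phi0 5 4 0 = 0"
  "phi0 5 4 1 = 0"
  "phi0 5 4 2 = 1"
  "phi0 5 4 3 = 0"
  "phi0 5 4 4 = 0"
  "phi0 5 4 5 = 0"
  "phi0 5 4 6 = 0"
  "phi0 5 5 0 = 0"
  "phi0 5 5 1 = 0"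
  "phi0 5 5 2 = 0"
  "phi0 5 5 3 = 0"
  "phi0 5 5 4 = 0"
  "phi0 5 5 5 = 0"
  "phi0 5 5 6 = 0"
  "phi0 5 6 0 = 1"
  "phi0 5 6 1 = 0"
  "phi0 5 6 2 = 0"
  "phi0 5 6 3 = 0"
  "phi0 5 6 4 = 0"
  "phi0 5 6 5 = 0"
  "phi0 5 6 6 = 0"
  "phi0 6 0 0 = 0"
  "phi0 6 0 1 = 0"
  "phi0 6 0 2 = 0"
  "phi0 6 0 3 = 0"
  "phi0 6 0 4 = 0"
  "phi0 6 0 5 = 1"
  "phi0 6 0 6 = 0"
  "phi0 6 1 0 = 0"
  "phi0 6 1 1 = 0"
  "phi0 6 1 2 = 0"
  "phi0 6 1 3 = 0"
  "phi0 6 1 4 = -1"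
  "phi0 6 1 5 = 0"
  "phi0 6 1 6 = 0"
  "phi0 6 2 0 = 0"
  "phi0 6 2 1 = 0"
  "phi0 6 2 2 = 0"
  "phi0 6 2 3 = -1"
  "phi0 6 2 4 = 0"
  "phi0 6 2 5 = 0"
  "phi0 6 2 6 = 0"
  "phi0 6 3 0 = 0"
  "phi0 6 3 1 = 0"
  "phi0 6 3 2 = 1"
  "phi0 6 3 3 = 0"
  "phi0 6 3 4 = 0"
  "phi0 6 3 5 = 0"
  "phi0 6 3 6 = 0"
  "phi0 6 4 0 = 0"
  "phi0 6 4 1 = 1"
  "phi0 6 4 2 = 0"
  "phi0 6 4 3 = 0"
  "phi0 6 4 4 = 0"
  "phi0 6 4 5 = 0"
  "phi0 6 4 6 = 0"
  "phi0 6 5 0 = -1"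
  "phi0 6 5 1 = 0"
  "phi0 6 5 2 = 0"
  "phi0 6 5 3 = 0"
  "phi0 6 5 4 = 0"
  "phi0 6 5 5 = 0"
  "phi0 6 5 6 = 0"
  "phi0 6 6 0 = 0"
  "phi0 6 6 1 = 0"
  "phi0 6 6 2 = 0"
  "phi0 6 6 3 = 0"
  "phi0 6 6 4 = 0"
  "phi0 6 6 5 = 0"
  "phi0 6 6 6 = 0"
  by (simp_all add: phi0_def alt3_def)

lemma cross7_zero[simp]: "cross7 phi Y 0 = 0"
  by (simp add: cross7_def vec_eq_iff)
lemma sum_axis_left: "(\<Sum>a\<in>UNIV. axis i (1::real) $ a * f a) = f i"
proof -
  have "(\<lambda>a. axis i (1::real) $ a * f a) = (\<lambda>a. if a = i then f a else 0)" by (auto simp: axis_def)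
  then show ?thesis by (simp only:) simp
qed
lemma cross7_e7: "cross7 phi (e7 i) V = (\<chi> m. \<Sum>n\<in>UNIV. phi i n m * V$n)"
proof -
  have "\<And>a m. (\<Sum>b\<in>UNIV. phi a b m * axis i 1 $ a * V $ b) = axis i (1::real) $ a * (\<Sum>b\<in>UNIV. phi a b m * V $ b)"
    by (simp add: sum_distrib_left mult_ac)
  then show ?thesis by (simp add: cross7_def e7_def vec_eq_iff sum_axis_left)
qed
lemma inner_e7: "e7 i \<bullet> V = V $ i"
  by (simp add: e7_def inner_axis')
lemma cl1: "cliff phi (e7 k) zeta = (0, e7 k)"
  by (simp add: cliff_def zeta_def)
lemma cl2: "cliff phi (e7 j) (cliff phi (e7 k) zeta) = (-(if j = k then 1 else 0), \<chi> n. phi j k n)"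
  apply (subst cl1)
  apply (simp add: cliff_def cross7_e7 inner_e7)
  apply (simp add: e7_def axis_def vec_eq_iff if_distrib sum.delta cong: if_cong)
  done
lemma cl3: "cliff phi (e7 i) (cliff phi (e7 j) (cliff phi (e7 k) zeta)) =
   (- phi j k i, \<chi> m. -(if j = k \<and> i = m then 1 else 0) + (\<Sum>n\<in>UNIV. phi i n m * phi j k n))"
  apply (subst cl2)
  apply (simp add: cliff_def cross7_e7 inner_e7)
  apply (simp add: e7_def axis_def vec_eq_iff)
  done

lemma act2_zeta: "act2 phi w zeta = (-(1/2) * (\<Sum>i\<in>UNIV. w i i), \<chi> m. (1/2) * (\<Sum>i\<in>UNIV. \<Sum>j\<in>UNIV. w i j * phi i j m))"
  apply (simp add: act2_def cl2 prod_eq_iff fst_sum snd_sum)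
  apply (simp add: vec_eq_iff sum_component sum_distrib_left sum_negf mult_ac if_distrib sum.delta cong: if_cong)
  done

lemma core1: "act2 phi0 (contr3 X phi0) zeta = 3 *\<^sub>R cliff phi0 X zeta"
  apply (subst act2_zeta)
  apply (simp add: contr3_def cliff_def zeta_def vec_eq_iff forall_7)
  apply (simp add: sum_7)
  done

lemma Pc2_0: "(\<Sum>i\<in>UNIV. \<Sum>j\<in>UNIV. F i j * phi0 i j 0) = F 1 2 - F 2 1 + F 3 4 - F 4 3 + F 5 6 - F 6 5"
  by (simp add: sum_7)
lemma Pc2_1: "(\<Sum>i\<in>UNIV. \<Sum>j\<in>UNIV. F i j * phi0 i j 1) = - F 0 2 + F 2 0 + F 3 5 - F 4 6 - F 5 3 + F 6 4"
  by (simp add: sum_7)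
lemma Pc2_2: "(\<Sum>i\<in>UNIV. \<Sum>j\<in>UNIV. F i j * phi0 i j 2) = F 0 1 - F 1 0 - F 3 6 - F 4 5 + F 5 4 + F 6 3"
  by (simp add: sum_7)
lemma Pc2_3: "(\<Sum>i\<in>UNIV. \<Sum>j\<in>UNIV. F i j * phi0 i j 3) = - F 0 4 - F 1 5 + F 2 6 + F 4 0 + F 5 1 - F 6 2"
  by (simp add: sum_7)
lemma Pc2_4: "(\<Sum>i\<in>UNIV. \<Sum>j\<in>UNIV. F i j * phi0 i j 4) = F 0 3 + F 1 6 + F 2 5 - F 3 0 - F 5 2 - F 6 1"
  by (simp add: sum_7)
lemma Pc2_5: "(\<Sum>i\<in>UNIV. \<Sum>j\<in>UNIV. F i j * phi0 i j 5) = - F 0 6 + F 1 3 - F 2 4 - F 3 1 + F 4 2 + F 6 0"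
  by (simp add: sum_7)
lemma Pc2_6: "(\<Sum>i\<in>UNIV. \<Sum>j\<in>UNIV. F i j * phi0 i j 6) = F 0 5 - F 1 4 - F 2 3 + F 3 2 + F 4 1 - F 5 0"
  by (simp add: sum_7)


lemma core2:
  assumes hs: "\<And>i j. h i j = h j i" and ht: "(\<Sum>i\<in>UNIV. h i i) = 0"
  shows "act2 phi0 (contr3 X (gamma_of phi0 h)) zeta = 2 *\<^sub>R cliff phi0 (apply_h h X) zeta"
proof -
  have h66: "h 6 6 = - (h 0 0 + h 1 1 + h 2 2 + h 3 3 + h 4 4 + h 5 5)" using ht by (simp add: sum_7)
  show ?thesis
  apply (subst act2_zeta)
  apply (simp add: cliff_def zeta_def vec_eq_iff forall_7)
  apply (simp only: Pc2_0 Pc2_1 Pc2_2 Pc2_3 Pc2_4 Pc2_5 Pc2_6)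
  apply (simp add: sum_7 contr3_def gamma_of_def apply_h_def)
  apply (simp add: hs h66 algebra_simps)
  done
qed

lemma levi_perm: "p permutes (UNIV::7 set) \<Longrightarrow> levi7 (I \<circ> p) = of_int (sign p) * levi7 I"
  unfolding levi7_def using det_permute_rows[of p "\<chi> r. axis (I r) (1::real)"] by simp
lemma levi_swap: "r \<noteq> s \<Longrightarrow> levi7 (I \<circ> Transposition.transpose r s) = - levi7 I"
  by (simp add: levi_perm permutes_swap_id sign_swap_id)
lemma levi_rep: "r \<noteq> s \<Longrightarrow> I r = I s \<Longrightarrow> levi7 I = 0"
  unfolding levi7_def by (rule det_identical_rows[of r s]) (simp_all add: row_def)
lemma levi_id: "levi7 (idx7 0 1 2 3 4 5 6) = 1"
proof -
  have "(\<chi> r. axis (idx7 0 1 2 3 4 5 6 r) (1::real)) = mat 1"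
    apply (simp add: vec_eq_iff mat_def axis_def)
    apply (intro allI) subgoal for i j using exhaust_7[of i] by (auto simp: idx7_def)
    done
  then show ?thesis by (simp add: levi7_def)
qed
lemma levi_sw0: "levi7 (idx7 j i k a b c d) = - levi7 (idx7 i j k a b c d)"
proof -
  have "idx7 j i k a b c d = idx7 i j k a b c d \<circ> Transposition.transpose 0 1"
    apply (rule ext) subgoal for x using exhaust_7[of x] by (auto simp: idx7_def Transposition.transpose_def) done
  then show ?thesis by (simp add: levi_swap)
qed

lemma levi_sw1: "levi7 (idx7 i k j a b c d) = - levi7 (idx7 i j k a b c d)"
proof -
  have "idx7 i k j a b c d = idx7 i j k a b c d \<circ> Transposition.transpose 1 2"
    apply (rule ext) subgoal for x using exhaust_7[of x] by (auto simp: idx7_def Transposition.transpose_def) done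
  then show ?thesis by (simp add: levi_swap)
qed

lemma levi_sw2: "levi7 (idx7 i j a k b c d) = - levi7 (idx7 i j k a b c d)"
proof -
  have "idx7 i j a k b c d = idx7 i j k a b c d \<circ> Transposition.transpose 2 3"
    apply (rule ext) subgoal for x using exhaust_7[of x] by (auto simp: idx7_def Transposition.transpose_def) done
  then show ?thesis by (simp add: levi_swap)
qed

lemma levi_sw3: "levi7 (idx7 i j k b a c d) = - levi7 (idx7 i j k a b c d)"
proof -
  have "idx7 i j k b a c d = idx7 i j k a b c d \<circ> Transposition.transpose 3 4"
    apply (rule ext) subgoal for x using exhaust_7[of x] by (auto simp: idx7_def Transposition.transpose_def) done
  then show ?thesis by (simp add: levi_swap)
qed

lemma levi_sw4: "levi7 (idx7 i j k a c b d) = - levi7 (idx7 i j k a b c d)"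
proof -
  have "idx7 i j k a c b d = idx7 i j k a b c d \<circ> Transposition.transpose 4 5"
    apply (rule ext) subgoal for x using exhaust_7[of x] by (auto simp: idx7_def Transposition.transpose_def) done
  then show ?thesis by (simp add: levi_swap)
qed

lemma levi_sw5: "levi7 (idx7 i j k a b d c) = - levi7 (idx7 i j k a b c d)"
proof -
  have "idx7 i j k a b d c = idx7 i j k a b c d \<circ> Transposition.transpose 5 6"
    apply (rule ext) subgoal for x using exhaust_7[of x] by (auto simp: idx7_def Transposition.transpose_def) done
  then show ?thesis by (simp add: levi_swap)
qed

lemma levi_so0: "j < i \<Longrightarrow> levi7 (idx7 i j k a b c d) = - levi7 (idx7 j i k a b c d)"
  by (rule levi_sw0)

lemma levi_so1: "k < j \<Longrightarrow> levi7 (idx7 i j k a b c d) = - levi7 (idx7 i k j a b c d)"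
  by (rule levi_sw1)

lemma levi_so2: "a < k \<Longrightarrow> levi7 (idx7 i j k a b c d) = - levi7 (idx7 i j a k b c d)"
  by (rule levi_sw2)

lemma levi_so3: "b < a \<Longrightarrow> levi7 (idx7 i j k a b c d) = - levi7 (idx7 i j k b a c d)"
  by (rule levi_sw3)

lemma levi_so4: "c < b \<Longrightarrow> levi7 (idx7 i j k a b c d) = - levi7 (idx7 i j k a c b d)"
  by (rule levi_sw4)

lemma levi_so5: "d < c \<Longrightarrow> levi7 (idx7 i j k a b c d) = - levi7 (idx7 i j k a b d c)"
  by (rule levi_sw5)

lemma levi_rep01: "levi7 (idx7 i i k a b c d) = 0"
  by (rule levi_rep[where r=0 and s=1]) (simp_all add: idx7_def)

lemma levi_rep02: "levi7 (idx7 i j i a b c d) = 0"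
  by (rule levi_rep[where r=0 and s=2]) (simp_all add: idx7_def)

lemma levi_rep03: "levi7 (idx7 i j k i b c d) = 0"
  by (rule levi_rep[where r=0 and s=3]) (simp_all add: idx7_def)

lemma levi_rep04: "levi7 (idx7 i j k a i c d) = 0"
  by (rule levi_rep[where r=0 and s=4]) (simp_all add: idx7_def)

lemma levi_rep05: "levi7 (idx7 i j k a b i d) = 0"
  by (rule levi_rep[where r=0 and s=5]) (simp_all add: idx7_def)

lemma levi_rep06: "levi7 (idx7 i j k a b c i) = 0"
  by (rule levi_rep[where r=0 and s=6]) (simp_all add: idx7_def)

lemma levi_rep12: "levi7 (idx7 i j j a b c d) = 0"
  by (rule levi_rep[where r=1 and s=2]) (simp_all add: idx7_def)

lemma levi_rep13: "levi7 (idx7 i j k j b c d) = 0"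
  by (rule levi_rep[where r=1 and s=3]) (simp_all add: idx7_def)

lemma levi_rep14: "levi7 (idx7 i j k a j c d) = 0"
  by (rule levi_rep[where r=1 and s=4]) (simp_all add: idx7_def)

lemma levi_rep15: "levi7 (idx7 i j k a b j d) = 0"
  by (rule levi_rep[where r=1 and s=5]) (simp_all add: idx7_def)

lemma levi_rep16: "levi7 (idx7 i j k a b c j) = 0"
  by (rule levi_rep[where r=1 and s=6]) (simp_all add: idx7_def)

lemma levi_rep23: "levi7 (idx7 i j k k b c d) = 0"
  by (rule levi_rep[where r=2 and s=3]) (simp_all add: idx7_def)

lemma levi_rep24: "levi7 (idx7 i j k a k c d) = 0"
  by (rule levi_rep[where r=2 and s=4]) (simp_all add: idx7_def)

lemma levi_rep25: "levi7 (idx7 i j k a b k d) = 0"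
  by (rule levi_rep[where r=2 and s=5]) (simp_all add: idx7_def)

lemma levi_rep26: "levi7 (idx7 i j k a b c k) = 0"
  by (rule levi_rep[where r=2 and s=6]) (simp_all add: idx7_def)

lemma levi_rep34: "levi7 (idx7 i j k a a c d) = 0"
  by (rule levi_rep[where r=3 and s=4]) (simp_all add: idx7_def)

lemma levi_rep35: "levi7 (idx7 i j k a b a d) = 0"
  by (rule levi_rep[where r=3 and s=5]) (simp_all add: idx7_def)

lemma levi_rep36: "levi7 (idx7 i j k a b c a) = 0"
  by (rule levi_rep[where r=3 and s=6]) (simp_all add: idx7_def)

lemma levi_rep45: "levi7 (idx7 i j k a b b d) = 0"
  by (rule levi_rep[where r=4 and s=5]) (simp_all add: idx7_def)

lemma levi_rep46: "levi7 (idx7 i j k a b c b) = 0"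
  by (rule levi_rep[where r=4 and s=6]) (simp_all add: idx7_def)

lemma levi_rep56: "levi7 (idx7 i j k a b c c) = 0"
  by (rule levi_rep[where r=5 and s=6]) (simp_all add: idx7_def)

lemmas levi_reps = levi_rep01 levi_rep02 levi_rep03 levi_rep04 levi_rep05 levi_rep06 levi_rep12 levi_rep13 levi_rep14 levi_rep15 levi_rep16 levi_rep23 levi_rep24 levi_rep25 levi_rep26 levi_rep34 levi_rep35 levi_rep36 levi_rep45 levi_rep46 levi_rep56

lemmas levi_sorts = levi_so0 levi_so1 levi_so2 levi_so3 levi_so4 levi_so5

lemma hod_0123: "hodge3 ori g 0 1 2 3 = ori / 6 * (g 4 5 6 - g 4 6 5 - g 5 4 6 + g 5 6 4 + g 6 4 5 - g 6 5 4)"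
  unfolding hodge3_def by (simp add: sum_7 levi_reps levi_sorts less_bit1_def bit1.Rep_numeral bit1.Rep_0 bit1.Rep_1 levi_id algebra_simps)
lemma hod_0124: "hodge3 ori g 0 1 2 4 = ori / 6 * (- g 3 5 6 + g 3 6 5 + g 5 3 6 - g 5 6 3 - g 6 3 5 + g 6 5 3)"
  unfolding hodge3_def by (simp add: sum_7 levi_reps levi_sorts less_bit1_def bit1.Rep_numeral bit1.Rep_0 bit1.Rep_1 levi_id algebra_simps)
lemma hod_0125: "hodge3 ori g 0 1 2 5 = ori / 6 * (g 3 4 6 - g 3 6 4 - g 4 3 6 + g 4 6 3 + g 6 3 4 - g 6 4 3)"
  unfolding hodge3_def by (simp add: sum_7 levi_reps levi_sorts less_bit1_def bit1.Rep_numeral bit1.Rep_0 bit1.Rep_1 levi_id algebra_simps)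
lemma hod_0126: "hodge3 ori g 0 1 2 6 = ori / 6 * (- g 3 4 5 + g 3 5 4 + g 4 3 5 - g 4 5 3 - g 5 3 4 + g 5 4 3)"
  unfolding hodge3_def by (simp add: sum_7 levi_reps levi_sorts less_bit1_def bit1.Rep_numeral bit1.Rep_0 bit1.Rep_1 levi_id algebra_simps)
lemma hod_0134: "hodge3 ori g 0 1 3 4 = ori / 6 * (g 2 5 6 - g 2 6 5 - g 5 2 6 + g 5 6 2 + g 6 2 5 - g 6 5 2)"
  unfolding hodge3_def by (simp add: sum_7 levi_reps levi_sorts less_bit1_def bit1.Rep_numeral bit1.Rep_0 bit1.Rep_1 levi_id algebra_simps)
lemma hod_0135: "hodge3 ori g 0 1 3 5 = ori / 6 * (- g 2 4 6 + g 2 6 4 + g 4 2 6 - g 4 6 2 - g 6 2 4 + g 6 4 2)"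
  unfolding hodge3_def by (simp add: sum_7 levi_reps levi_sorts less_bit1_def bit1.Rep_numeral bit1.Rep_0 bit1.Rep_1 levi_id algebra_simps)
lemma hod_0136: "hodge3 ori g 0 1 3 6 = ori / 6 * (g 2 4 5 - g 2 5 4 - g 4 2 5 + g 4 5 2 + g 5 2 4 - g 5 4 2)"
  unfolding hodge3_def by (simp add: sum_7 levi_reps levi_sorts less_bit1_def bit1.Rep_numeral bit1.Rep_0 bit1.Rep_1 levi_id algebra_simps)
lemma hod_0145: "hodge3 ori g 0 1 4 5 = ori / 6 * (g 2 3 6 - g 2 6 3 - g 3 2 6 + g 3 6 2 + g 6 2 3 - g 6 3 2)"
  unfolding hodge3_def by (simp add: sum_7 levi_reps levi_sorts less_bit1_def bit1.Rep_numeral bit1.Rep_0 bit1.Rep_1 levi_id algebra_simps)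
lemma hod_0146: "hodge3 ori g 0 1 4 6 = ori / 6 * (- g 2 3 5 + g 2 5 3 + g 3 2 5 - g 3 5 2 - g 5 2 3 + g 5 3 2)"
  unfolding hodge3_def by (simp add: sum_7 levi_reps levi_sorts less_bit1_def bit1.Rep_numeral bit1.Rep_0 bit1.Rep_1 levi_id algebra_simps)
lemma hod_0156: "hodge3 ori g 0 1 5 6 = ori / 6 * (g 2 3 4 - g 2 4 3 - g 3 2 4 + g 3 4 2 + g 4 2 3 - g 4 3 2)"
  unfolding hodge3_def by (simp add: sum_7 levi_reps levi_sorts less_bit1_def bit1.Rep_numeral bit1.Rep_0 bit1.Rep_1 levi_id algebra_simps)
lemma hod_0234: "hodge3 ori g 0 2 3 4 = ori / 6 * (- g 1 5 6 + g 1 6 5 + g 5 1 6 - g 5 6 1 - g 6 1 5 + g 6 5 1)"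
  unfolding hodge3_def by (simp add: sum_7 levi_reps levi_sorts less_bit1_def bit1.Rep_numeral bit1.Rep_0 bit1.Rep_1 levi_id algebra_simps)
lemma hod_0235: "hodge3 ori g 0 2 3 5 = ori / 6 * (g 1 4 6 - g 1 6 4 - g 4 1 6 + g 4 6 1 + g 6 1 4 - g 6 4 1)"
  unfolding hodge3_def by (simp add: sum_7 levi_reps levi_sorts less_bit1_def bit1.Rep_numeral bit1.Rep_0 bit1.Rep_1 levi_id algebra_simps)
lemma hod_0236: "hodge3 ori g 0 2 3 6 = ori / 6 * (- g 1 4 5 + g 1 5 4 + g 4 1 5 - g 4 5 1 - g 5 1 4 + g 5 4 1)"
  unfolding hodge3_def by (simp add: sum_7 levi_reps levi_sorts less_bit1_def bit1.Rep_numeral bit1.Rep_0 bit1.Rep_1 levi_id algebra_simps)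
lemma hod_0245: "hodge3 ori g 0 2 4 5 = ori / 6 * (- g 1 3 6 + g 1 6 3 + g 3 1 6 - g 3 6 1 - g 6 1 3 + g 6 3 1)"
  unfolding hodge3_def by (simp add: sum_7 levi_reps levi_sorts less_bit1_def bit1.Rep_numeral bit1.Rep_0 bit1.Rep_1 levi_id algebra_simps)
lemma hod_0246: "hodge3 ori g 0 2 4 6 = ori / 6 * (g 1 3 5 - g 1 5 3 - g 3 1 5 + g 3 5 1 + g 5 1 3 - g 5 3 1)"
  unfolding hodge3_def by (simp add: sum_7 levi_reps levi_sorts less_bit1_def bit1.Rep_numeral bit1.Rep_0 bit1.Rep_1 levi_id algebra_simps)
lemma hod_0256: "hodge3 ori g 0 2 5 6 = ori / 6 * (- g 1 3 4 + g 1 4 3 + g 3 1 4 - g 3 4 1 - g 4 1 3 + g 4 3 1)"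
  unfolding hodge3_def by (simp add: sum_7 levi_reps levi_sorts less_bit1_def bit1.Rep_numeral bit1.Rep_0 bit1.Rep_1 levi_id algebra_simps)
lemma hod_0345: "hodge3 ori g 0 3 4 5 = ori / 6 * (g 1 2 6 - g 1 6 2 - g 2 1 6 + g 2 6 1 + g 6 1 2 - g 6 2 1)"
  unfolding hodge3_def by (simp add: sum_7 levi_reps levi_sorts less_bit1_def bit1.Rep_numeral bit1.Rep_0 bit1.Rep_1 levi_id algebra_simps)
lemma hod_0346: "hodge3 ori g 0 3 4 6 = ori / 6 * (- g 1 2 5 + g 1 5 2 + g 2 1 5 - g 2 5 1 - g 5 1 2 + g 5 2 1)"
  unfolding hodge3_def by (simp add: sum_7 levi_reps levi_sorts less_bit1_def bit1.Rep_numeral bit1.Rep_0 bit1.Rep_1 levi_id algebra_simps)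
lemma hod_0356: "hodge3 ori g 0 3 5 6 = ori / 6 * (g 1 2 4 - g 1 4 2 - g 2 1 4 + g 2 4 1 + g 4 1 2 - g 4 2 1)"
  unfolding hodge3_def by (simp add: sum_7 levi_reps levi_sorts less_bit1_def bit1.Rep_numeral bit1.Rep_0 bit1.Rep_1 levi_id algebra_simps)
lemma hod_0456: "hodge3 ori g 0 4 5 6 = ori / 6 * (- g 1 2 3 + g 1 3 2 + g 2 1 3 - g 2 3 1 - g 3 1 2 + g 3 2 1)"
  unfolding hodge3_def by (simp add: sum_7 levi_reps levi_sorts less_bit1_def bit1.Rep_numeral bit1.Rep_0 bit1.Rep_1 levi_id algebra_simps)
lemma hod_1234: "hodge3 ori g 1 2 3 4 = ori / 6 * (g 0 5 6 - g 0 6 5 - g 5 0 6 + g 5 6 0 + g 6 0 5 - g 6 5 0)"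
  unfolding hodge3_def by (simp add: sum_7 levi_reps levi_sorts less_bit1_def bit1.Rep_numeral bit1.Rep_0 bit1.Rep_1 levi_id algebra_simps)
lemma hod_1235: "hodge3 ori g 1 2 3 5 = ori / 6 * (- g 0 4 6 + g 0 6 4 + g 4 0 6 - g 4 6 0 - g 6 0 4 + g 6 4 0)"
  unfolding hodge3_def by (simp add: sum_7 levi_reps levi_sorts less_bit1_def bit1.Rep_numeral bit1.Rep_0 bit1.Rep_1 levi_id algebra_simps)
lemma hod_1236: "hodge3 ori g 1 2 3 6 = ori / 6 * (g 0 4 5 - g 0 5 4 - g 4 0 5 + g 4 5 0 + g 5 0 4 - g 5 4 0)"
  unfolding hodge3_def by (simp add: sum_7 levi_reps levi_sorts less_bit1_def bit1.Rep_numeral bit1.Rep_0 bit1.Rep_1 levi_id algebra_simps)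
lemma hod_1245: "hodge3 ori g 1 2 4 5 = ori / 6 * (g 0 3 6 - g 0 6 3 - g 3 0 6 + g 3 6 0 + g 6 0 3 - g 6 3 0)"
  unfolding hodge3_def by (simp add: sum_7 levi_reps levi_sorts less_bit1_def bit1.Rep_numeral bit1.Rep_0 bit1.Rep_1 levi_id algebra_simps)
lemma hod_1246: "hodge3 ori g 1 2 4 6 = ori / 6 * (- g 0 3 5 + g 0 5 3 + g 3 0 5 - g 3 5 0 - g 5 0 3 + g 5 3 0)"
  unfolding hodge3_def by (simp add: sum_7 levi_reps levi_sorts less_bit1_def bit1.Rep_numeral bit1.Rep_0 bit1.Rep_1 levi_id algebra_simps)
lemma hod_1256: "hodge3 ori g 1 2 5 6 = ori / 6 * (g 0 3 4 - g 0 4 3 - g 3 0 4 + g 3 4 0 + g 4 0 3 - g 4 3 0)"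
  unfolding hodge3_def by (simp add: sum_7 levi_reps levi_sorts less_bit1_def bit1.Rep_numeral bit1.Rep_0 bit1.Rep_1 levi_id algebra_simps)
lemma hod_1345: "hodge3 ori g 1 3 4 5 = ori / 6 * (- g 0 2 6 + g 0 6 2 + g 2 0 6 - g 2 6 0 - g 6 0 2 + g 6 2 0)"
  unfolding hodge3_def by (simp add: sum_7 levi_reps levi_sorts less_bit1_def bit1.Rep_numeral bit1.Rep_0 bit1.Rep_1 levi_id algebra_simps)
lemma hod_1346: "hodge3 ori g 1 3 4 6 = ori / 6 * (g 0 2 5 - g 0 5 2 - g 2 0 5 + g 2 5 0 + g 5 0 2 - g 5 2 0)"
  unfolding hodge3_def by (simp add: sum_7 levi_reps levi_sorts less_bit1_def bit1.Rep_numeral bit1.Rep_0 bit1.Rep_1 levi_id algebra_simps)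
lemma hod_1356: "hodge3 ori g 1 3 5 6 = ori / 6 * (- g 0 2 4 + g 0 4 2 + g 2 0 4 - g 2 4 0 - g 4 0 2 + g 4 2 0)"
  unfolding hodge3_def by (simp add: sum_7 levi_reps levi_sorts less_bit1_def bit1.Rep_numeral bit1.Rep_0 bit1.Rep_1 levi_id algebra_simps)
lemma hod_1456: "hodge3 ori g 1 4 5 6 = ori / 6 * (g 0 2 3 - g 0 3 2 - g 2 0 3 + g 2 3 0 + g 3 0 2 - g 3 2 0)"
  unfolding hodge3_def by (simp add: sum_7 levi_reps levi_sorts less_bit1_def bit1.Rep_numeral bit1.Rep_0 bit1.Rep_1 levi_id algebra_simps)
lemma hod_2345: "hodge3 ori g 2 3 4 5 = ori / 6 * (g 0 1 6 - g 0 6 1 - g 1 0 6 + g 1 6 0 + g 6 0 1 - g 6 1 0)"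
  unfolding hodge3_def by (simp add: sum_7 levi_reps levi_sorts less_bit1_def bit1.Rep_numeral bit1.Rep_0 bit1.Rep_1 levi_id algebra_simps)
lemma hod_2346: "hodge3 ori g 2 3 4 6 = ori / 6 * (- g 0 1 5 + g 0 5 1 + g 1 0 5 - g 1 5 0 - g 5 0 1 + g 5 1 0)"
  unfolding hodge3_def by (simp add: sum_7 levi_reps levi_sorts less_bit1_def bit1.Rep_numeral bit1.Rep_0 bit1.Rep_1 levi_id algebra_simps)
lemma hod_2356: "hodge3 ori g 2 3 5 6 = ori / 6 * (g 0 1 4 - g 0 4 1 - g 1 0 4 + g 1 4 0 + g 4 0 1 - g 4 1 0)"
  unfolding hodge3_def by (simp add: sum_7 levi_reps levi_sorts less_bit1_def bit1.Rep_numeral bit1.Rep_0 bit1.Rep_1 levi_id algebra_simps)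
lemma hod_2456: "hodge3 ori g 2 4 5 6 = ori / 6 * (- g 0 1 3 + g 0 3 1 + g 1 0 3 - g 1 3 0 - g 3 0 1 + g 3 1 0)"
  unfolding hodge3_def by (simp add: sum_7 levi_reps levi_sorts less_bit1_def bit1.Rep_numeral bit1.Rep_0 bit1.Rep_1 levi_id algebra_simps)
lemma hod_3456: "hodge3 ori g 3 4 5 6 = ori / 6 * (g 0 1 2 - g 0 2 1 - g 1 0 2 + g 1 2 0 + g 2 0 1 - g 2 1 0)"
  unfolding hodge3_def by (simp add: sum_7 levi_reps levi_sorts less_bit1_def bit1.Rep_numeral bit1.Rep_0 bit1.Rep_1 levi_id algebra_simps)

lemmas hods = hod_0123 hod_0124 hod_0125 hod_0126 hod_0134 hod_0135 hod_0136 hod_0145 hod_0146 hod_0156 hod_0234 hod_0235 hod_0236 hod_0245 hod_0246 hod_0256 hod_0345 hod_0346 hod_0356 hod_0456 hod_1234 hod_1235 hod_1236 hod_1245 hod_1246 hod_1256 hod_1345 hod_1346 hod_1356 hod_1456 hod_2345 hod_2346 hod_2356 hod_2456 hod_3456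

lemma hodge_sw3: "hodge3 ori g b a c d = - hodge3 ori g a b c d"
  proof -
  have e: "\<And>i j k. levi7 (idx7 i j k b a c d) = - levi7 (idx7 i j k a b c d)" by (rule levi_sw3)
  show ?thesis unfolding hodge3_def by (simp only: e) (simp add: sum_negf)
qed
lemma hodge_sw4: "hodge3 ori g a c b d = - hodge3 ori g a b c d"
  proof -
  have e: "\<And>i j k. levi7 (idx7 i j k a c b d) = - levi7 (idx7 i j k a b c d)" by (rule levi_sw4)
  show ?thesis unfolding hodge3_def by (simp only: e) (simp add: sum_negf)
qed
lemma hodge_sw5: "hodge3 ori g a b d c = - hodge3 ori g a b c d"
  proof -
  have e: "\<And>i j k. levi7 (idx7 i j k a b d c) = - levi7 (idx7 i j k a b c d)" by (rule levi_sw5)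
  show ?thesis unfolding hodge3_def by (simp only: e) (simp add: sum_negf)
qed
lemma hodge_so3: "b < a \<Longrightarrow> hodge3 ori g a b c d = - hodge3 ori g b a c d" by (rule hodge_sw3)
lemma hodge_so4: "c < b \<Longrightarrow> hodge3 ori g a b c d = - hodge3 ori g a c b d" by (rule hodge_sw4)
lemma hodge_so5: "d < c \<Longrightarrow> hodge3 ori g a b c d = - hodge3 ori g a b d c" by (rule hodge_sw5)
lemma hodge_rep:
  "hodge3 ori g a a c d = 0" "hodge3 ori g a b a d = 0" "hodge3 ori g a b c a = 0"
  "hodge3 ori g a b b d = 0" "hodge3 ori g a b c b = 0" "hodge3 ori g a b c c = 0"
  unfolding hodge3_def by (simp_all add: levi_reps)


lemma act3_zeta: "act3 phi w zeta = (-(1/6) * (\<Sum>i\<in>UNIV. \<Sum>j\<in>UNIV. \<Sum>k\<in>UNIV. w i j k * phi j k i),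
   \<chi> m. (1/6) * (\<Sum>i\<in>UNIV. \<Sum>j\<in>UNIV. \<Sum>k\<in>UNIV. w i j k * (-(if j = k \<and> i = m then 1 else 0) + (\<Sum>n\<in>UNIV. phi i n m * phi j k n))))"
  apply (simp add: act3_def cl3 prod_eq_iff fst_sum snd_sum)
  apply (simp add: vec_eq_iff sum_component sum_distrib_left sum_negf mult_ac)
  done

lemma act3_zeta': "act3 phi w zeta = (-(1/6) * (\<Sum>i\<in>UNIV. \<Sum>j\<in>UNIV. \<Sum>k\<in>UNIV. w i j k * phi j k i),
   \<chi> m. (1/6) * (-(\<Sum>j\<in>UNIV. w m j j) + (\<Sum>i\<in>UNIV. \<Sum>j\<in>UNIV. \<Sum>k\<in>UNIV. w i j k * (\<Sum>n\<in>UNIV. phi i n m * phi j k n))))"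
proof -
  have e: "(\<Sum>i\<in>UNIV. \<Sum>j\<in>UNIV. \<Sum>k\<in>UNIV. w i j k * (-(if j = k \<and> i = m then 1 else 0) + S i j k))
     = -(\<Sum>j\<in>UNIV. w m j j) + (\<Sum>i\<in>UNIV. \<Sum>j\<in>UNIV. \<Sum>k\<in>UNIV. w i j k * S i j k)" for m S
  proof -
    have "(\<Sum>i\<in>UNIV. \<Sum>j\<in>UNIV. \<Sum>k\<in>UNIV. w i j k * (if j = k \<and> i = m then 1 else 0))
       = (\<Sum>i\<in>UNIV. if i = m then (\<Sum>j\<in>UNIV. w i j j) else 0)"
      by (rule sum.cong) (auto simp: if_distrib sum.delta cong: if_cong)
    then show ?thesis by (simp add: right_diff_distrib sum_subtractf)
  qed
  show ?thesis by (subst act3_zeta) (simp only: e)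
qed

lemma S_fst: "(\<Sum>i\<in>UNIV. \<Sum>j\<in>UNIV. \<Sum>k\<in>UNIV. F i j k * phi0 j k i) = F 0 1 2 - F 0 2 1 + F 0 3 4 - F 0 4 3 + F 0 5 6 - F 0 6 5 - F 1 0 2 + F 1 2 0 + F 1 3 5 - F 1 4 6 - F 1 5 3 + F 1 6 4 + F 2 0 1 - F 2 1 0 - F 2 3 6 - F 2 4 5 + F 2 5 4 + F 2 6 3 - F 3 0 4 - F 3 1 5 + F 3 2 6 + F 3 4 0 + F 3 5 1 - F 3 6 2 + F 4 0 3 + F 4 1 6 + F 4 2 5 - F 4 3 0 - F 4 5 2 - F 4 6 1 - F 5 0 6 + F 5 1 3 - F 5 2 4 - F 5 3 1 + F 5 4 2 + F 5 6 0 + F 6 0 5 - F 6 1 4 - F 6 2 3 + F 6 3 2 + F 6 4 1 - F 6 5 0"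
  by (simp add: sum_7)
lemma S_0: "(\<Sum>i\<in>UNIV. \<Sum>j\<in>UNIV. \<Sum>k\<in>UNIV. F i j k * (\<Sum>n\<in>UNIV. phi0 i n 0 * phi0 j k n)) = F 1 0 1 - F 1 1 0 - F 1 3 6 - F 1 4 5 + F 1 5 4 + F 1 6 3 + F 2 0 2 - F 2 2 0 - F 2 3 5 + F 2 4 6 + F 2 5 3 - F 2 6 4 + F 3 0 3 + F 3 1 6 + F 3 2 5 - F 3 3 0 - F 3 5 2 - F 3 6 1 + F 4 0 4 + F 4 1 5 - F 4 2 6 - F 4 4 0 - F 4 5 1 + F 4 6 2 + F 5 0 5 - F 5 1 4 - F 5 2 3 + F 5 3 2 + F 5 4 1 - F 5 5 0 + F 6 0 6 - F 6 1 3 + F 6 2 4 + F 6 3 1 - F 6 4 2 - F 6 6 0"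
  by (simp add: sum_7)
lemma S_1: "(\<Sum>i\<in>UNIV. \<Sum>j\<in>UNIV. \<Sum>k\<in>UNIV. F i j k * (\<Sum>n\<in>UNIV. phi0 i n 1 * phi0 j k n)) = - F 0 0 1 + F 0 1 0 + F 0 3 6 + F 0 4 5 - F 0 5 4 - F 0 6 3 + F 2 1 2 - F 2 2 1 + F 2 3 4 - F 2 4 3 + F 2 5 6 - F 2 6 5 - F 3 0 6 + F 3 1 3 - F 3 2 4 - F 3 3 1 + F 3 4 2 + F 3 6 0 - F 4 0 5 + F 4 1 4 + F 4 2 3 - F 4 3 2 - F 4 4 1 + F 4 5 0 + F 5 0 4 + F 5 1 5 - F 5 2 6 - F 5 4 0 - F 5 5 1 + F 5 6 2 + F 6 0 3 + F 6 1 6 + F 6 2 5 - F 6 3 0 - F 6 5 2 - F 6 6 1"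
  by (simp add: sum_7)
lemma S_2: "(\<Sum>i\<in>UNIV. \<Sum>j\<in>UNIV. \<Sum>k\<in>UNIV. F i j k * (\<Sum>n\<in>UNIV. phi0 i n 2 * phi0 j k n)) = - F 0 0 2 + F 0 2 0 + F 0 3 5 - F 0 4 6 - F 0 5 3 + F 0 6 4 - F 1 1 2 + F 1 2 1 - F 1 3 4 + F 1 4 3 - F 1 5 6 + F 1 6 5 - F 3 0 5 + F 3 1 4 + F 3 2 3 - F 3 3 2 - F 3 4 1 + F 3 5 0 + F 4 0 6 - F 4 1 3 + F 4 2 4 + F 4 3 1 - F 4 4 2 - F 4 6 0 + F 5 0 3 + F 5 1 6 + F 5 2 5 - F 5 3 0 - F 5 5 2 - F 5 6 1 - F 6 0 4 - F 6 1 5 + F 6 2 6 + F 6 4 0 + F 6 5 1 - F 6 6 2"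
  by (simp add: sum_7)
lemma S_3: "(\<Sum>i\<in>UNIV. \<Sum>j\<in>UNIV. \<Sum>k\<in>UNIV. F i j k * (\<Sum>n\<in>UNIV. phi0 i n 3 * phi0 j k n)) = - F 0 0 3 - F 0 1 6 - F 0 2 5 + F 0 3 0 + F 0 5 2 + F 0 6 1 + F 1 0 6 - F 1 1 3 + F 1 2 4 + F 1 3 1 - F 1 4 2 - F 1 6 0 + F 2 0 5 - F 2 1 4 - F 2 2 3 + F 2 3 2 + F 2 4 1 - F 2 5 0 + F 4 1 2 - F 4 2 1 + F 4 3 4 - F 4 4 3 + F 4 5 6 - F 4 6 5 - F 5 0 2 + F 5 2 0 + F 5 3 5 - F 5 4 6 - F 5 5 3 + F 5 6 4 - F 6 0 1 + F 6 1 0 + F 6 3 6 + F 6 4 5 - F 6 5 4 - F 6 6 3"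
  by (simp add: sum_7)
lemma S_4: "(\<Sum>i\<in>UNIV. \<Sum>j\<in>UNIV. \<Sum>k\<in>UNIV. F i j k * (\<Sum>n\<in>UNIV. phi0 i n 4 * phi0 j k n)) = - F 0 0 4 - F 0 1 5 + F 0 2 6 + F 0 4 0 + F 0 5 1 - F 0 6 2 + F 1 0 5 - F 1 1 4 - F 1 2 3 + F 1 3 2 + F 1 4 1 - F 1 5 0 - F 2 0 6 + F 2 1 3 - F 2 2 4 - F 2 3 1 + F 2 4 2 + F 2 6 0 - F 3 1 2 + F 3 2 1 - F 3 3 4 + F 3 4 3 - F 3 5 6 + F 3 6 5 - F 5 0 1 + F 5 1 0 + F 5 3 6 + F 5 4 5 - F 5 5 4 - F 5 6 3 + F 6 0 2 - F 6 2 0 - F 6 3 5 + F 6 4 6 + F 6 5 3 - F 6 6 4"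
  by (simp add: sum_7)
lemma S_5: "(\<Sum>i\<in>UNIV. \<Sum>j\<in>UNIV. \<Sum>k\<in>UNIV. F i j k * (\<Sum>n\<in>UNIV. phi0 i n 5 * phi0 j k n)) = - F 0 0 5 + F 0 1 4 + F 0 2 3 - F 0 3 2 - F 0 4 1 + F 0 5 0 - F 1 0 4 - F 1 1 5 + F 1 2 6 + F 1 4 0 + F 1 5 1 - F 1 6 2 - F 2 0 3 - F 2 1 6 - F 2 2 5 + F 2 3 0 + F 2 5 2 + F 2 6 1 + F 3 0 2 - F 3 2 0 - F 3 3 5 + F 3 4 6 + F 3 5 3 - F 3 6 4 + F 4 0 1 - F 4 1 0 - F 4 3 6 - F 4 4 5 + F 4 5 4 + F 4 6 3 + F 6 1 2 - F 6 2 1 + F 6 3 4 - F 6 4 3 + F 6 5 6 - F 6 6 5"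
  by (simp add: sum_7)
lemma S_6: "(\<Sum>i\<in>UNIV. \<Sum>j\<in>UNIV. \<Sum>k\<in>UNIV. F i j k * (\<Sum>n\<in>UNIV. phi0 i n 6 * phi0 j k n)) = - F 0 0 6 + F 0 1 3 - F 0 2 4 - F 0 3 1 + F 0 4 2 + F 0 6 0 - F 1 0 3 - F 1 1 6 - F 1 2 5 + F 1 3 0 + F 1 5 2 + F 1 6 1 + F 2 0 4 + F 2 1 5 - F 2 2 6 - F 2 4 0 - F 2 5 1 + F 2 6 2 + F 3 0 1 - F 3 1 0 - F 3 3 6 - F 3 4 5 + F 3 5 4 + F 3 6 3 - F 4 0 2 + F 4 2 0 + F 4 3 5 - F 4 4 6 - F 4 5 3 + F 4 6 4 - F 5 1 2 + F 5 2 1 - F 5 3 4 + F 5 4 3 - F 5 5 6 + F 5 6 5"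
  by (simp add: sum_7)

lemma core3:
  assumes hs: "\<And>i j. h i j = h j i" and ht: "(\<Sum>i\<in>UNIV. h i i) = 0"
  shows "act3 phi0 (contr4 X (hodge3 1 (gamma_of phi0 h))) zeta = - 2 *\<^sub>R cliff phi0 (apply_h h X) zeta"
proof -
  have h66: "h 6 6 = - (h 0 0 + h 1 1 + h 2 2 + h 3 3 + h 4 4 + h 5 5)" using ht by (simp add: sum_7)
  show ?thesis
  apply (subst act3_zeta')
  apply (simp add: cliff_def zeta_def vec_eq_iff forall_7)
  apply (simp only: S_fst S_0 S_1 S_2 S_3 S_4 S_5 S_6)
  apply (simp add: sum_7 contr4_def hodge_rep)
  apply (simp add: hodge_so3 hodge_so4 hodge_so5 less_bit1_def bit1.Rep_numeral bit1.Rep_0 bit1.Rep_1 hodge_rep)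
  apply (simp add: hods gamma_of_def sum_7 apply_h_def)
  apply (simp add: hs h66 algebra_simps)
  done
qed


definition push2 :: "real^7^7 \<Rightarrow> form2 \<Rightarrow> form2" where
  "push2 R w a b = (\<Sum>i\<in>UNIV. \<Sum>j\<in>UNIV. R$a$i * R$b$j * w i j)"

lemma orth1: assumes "orthogonal_matrix R"
  shows "(\<Sum>a\<in>UNIV. R$a$i * R$a$j) = (if i = j then 1 else (0::real))"
proof -
  have "(transpose R ** R) $ i $ j = mat 1 $ i $ j" using assms by (simp add: orthogonal_matrix_def)
  then show ?thesis by (simp add: matrix_matrix_mult_def transpose_def mat_def)
qed
lemma orth2: assumes "orthogonal_matrix R"
  shows "(\<Sum>i\<in>UNIV. R$a$i * R$b$i) = (if a = b then 1 else (0::real))"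
proof -
  have "(R ** transpose R) $ a $ b = mat 1 $ a $ b" using assms by (simp add: orthogonal_matrix_def)
  then show ?thesis by (simp add: matrix_matrix_mult_def transpose_def mat_def)
qed


lemma delta_sum1: "(\<Sum>b\<in>UNIV. (if (a::7) = b then 1 else 0) * F b) = (F a :: real)"
proof -
  have "(\<Sum>b\<in>UNIV. (if a = b then 1 else 0) * F b) = (\<Sum>b\<in>UNIV. if a = b then F b else 0)"
    by (rule sum.cong) auto
  also have "\<dots> = F a" by (simp add: sum.delta')
  finally show ?thesis .
qed

lemma delta_sum2: "(\<Sum>b\<in>UNIV. (if b = (a::7) then 1 else 0) * F b) = (F a :: real)"
  using delta_sum1[of a F] by (simp add: eq_commute)
lemma delta_sum3: "(\<Sum>b\<in>UNIV. F b * (if (a::7) = b then 1 else 0)) = (F a :: real)"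
  using delta_sum1[of a F] by (simp add: mult.commute)
lemma delta_sum4: "(\<Sum>b\<in>UNIV. F b * (if b = (a::7) then 1 else 0)) = (F a :: real)"
  using delta_sum2[of a F] by (simp add: mult.commute)
lemmas delta_sums = delta_sum1 delta_sum2 delta_sum3 delta_sum4

lemma front3: "(\<Sum>a\<in>UNIV. \<Sum>b\<in>UNIV. \<Sum>x\<in>UNIV. f a b x) = (\<Sum>x\<in>UNIV. \<Sum>a\<in>UNIV. \<Sum>b\<in>UNIV. f a b x)"
proof -
  have "(\<Sum>a\<in>UNIV. \<Sum>b\<in>UNIV. \<Sum>x\<in>UNIV. f a b x) = (\<Sum>a\<in>UNIV. \<Sum>x\<in>UNIV. \<Sum>b\<in>UNIV. f a b x)"
    by (rule sum.cong[OF refl], rule sum.swap)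
  also have "\<dots> = (\<Sum>x\<in>UNIV. \<Sum>a\<in>UNIV. \<Sum>b\<in>UNIV. f a b x)" by (rule sum.swap)
  finally show ?thesis .
qed
lemma front4: "(\<Sum>a\<in>UNIV. \<Sum>b\<in>UNIV. \<Sum>c\<in>UNIV. \<Sum>x\<in>UNIV. f a b c x) = (\<Sum>x\<in>UNIV. \<Sum>a\<in>UNIV. \<Sum>b\<in>UNIV. \<Sum>c\<in>UNIV. f a b c x)"
proof -
  have "(\<Sum>a\<in>UNIV. \<Sum>b\<in>UNIV. \<Sum>c\<in>UNIV. \<Sum>x\<in>UNIV. f a b c x) = (\<Sum>a\<in>UNIV. \<Sum>x\<in>UNIV. \<Sum>b\<in>UNIV. \<Sum>c\<in>UNIV. f a b c x)"
    by (rule sum.cong[OF refl], rule front3)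
  also have "\<dots> = (\<Sum>x\<in>UNIV. \<Sum>a\<in>UNIV. \<Sum>b\<in>UNIV. \<Sum>c\<in>UNIV. f a b c x)" by (rule sum.swap)
  finally show ?thesis .
qed
lemma front5: "(\<Sum>a\<in>UNIV. \<Sum>b\<in>UNIV. \<Sum>c\<in>UNIV. \<Sum>d\<in>UNIV. \<Sum>x\<in>UNIV. f a b c d x) = (\<Sum>x\<in>UNIV. \<Sum>a\<in>UNIV. \<Sum>b\<in>UNIV. \<Sum>c\<in>UNIV. \<Sum>d\<in>UNIV. f a b c d x)"
proof -
  have "(\<Sum>a\<in>UNIV. \<Sum>b\<in>UNIV. \<Sum>c\<in>UNIV. \<Sum>d\<in>UNIV. \<Sum>x\<in>UNIV. f a b c d x) = (\<Sum>a\<in>UNIV. \<Sum>x\<in>UNIV. \<Sum>b\<in>UNIV. \<Sum>c\<in>UNIV. \<Sum>d\<in>UNIV. f a b c d x)"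
    by (rule sum.cong[OF refl], rule front4)
  also have "\<dots> = (\<Sum>x\<in>UNIV. \<Sum>a\<in>UNIV. \<Sum>b\<in>UNIV. \<Sum>c\<in>UNIV. \<Sum>d\<in>UNIV. f a b c d x)" by (rule sum.swap)
  finally show ?thesis .
qed
lemma front6: "(\<Sum>a\<in>UNIV. \<Sum>b\<in>UNIV. \<Sum>c\<in>UNIV. \<Sum>d\<in>UNIV. \<Sum>e\<in>UNIV. \<Sum>x\<in>UNIV. f a b c d e x) = (\<Sum>x\<in>UNIV. \<Sum>a\<in>UNIV. \<Sum>b\<in>UNIV. \<Sum>c\<in>UNIV. \<Sum>d\<in>UNIV. \<Sum>e\<in>UNIV. f a b c d e x)"
proof -
  have "(\<Sum>a\<in>UNIV. \<Sum>b\<in>UNIV. \<Sum>c\<in>UNIV. \<Sum>d\<in>UNIV. \<Sum>e\<in>UNIV. \<Sum>x\<in>UNIV. f a b c d e x) = (\<Sum>a\<in>UNIV. \<Sum>x\<in>UNIV. \<Sum>b\<in>UNIV. \<Sum>c\<in>UNIV. \<Sum>d\<in>UNIV. \<Sum>e\<in>UNIV. f a b c d e x)"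
    by (rule sum.cong[OF refl], rule front5)
  also have "\<dots> = (\<Sum>x\<in>UNIV. \<Sum>a\<in>UNIV. \<Sum>b\<in>UNIV. \<Sum>c\<in>UNIV. \<Sum>d\<in>UNIV. \<Sum>e\<in>UNIV. f a b c d e x)" by (rule sum.swap)
  finally show ?thesis .
qed


lemma front7: "(\<Sum>a\<in>UNIV. \<Sum>b\<in>UNIV. \<Sum>c\<in>UNIV. \<Sum>d\<in>UNIV. \<Sum>e\<in>UNIV. \<Sum>f\<in>UNIV. \<Sum>x\<in>UNIV. F a b c d e f x) = (\<Sum>x\<in>UNIV. \<Sum>a\<in>UNIV. \<Sum>b\<in>UNIV. \<Sum>c\<in>UNIV. \<Sum>d\<in>UNIV. \<Sum>e\<in>UNIV. \<Sum>f\<in>UNIV. F a b c d e f x)"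
proof -
  have "(\<Sum>a\<in>UNIV. \<Sum>b\<in>UNIV. \<Sum>c\<in>UNIV. \<Sum>d\<in>UNIV. \<Sum>e\<in>UNIV. \<Sum>f\<in>UNIV. \<Sum>x\<in>UNIV. F a b c d e f x) = (\<Sum>a\<in>UNIV. \<Sum>x\<in>UNIV. \<Sum>b\<in>UNIV. \<Sum>c\<in>UNIV. \<Sum>d\<in>UNIV. \<Sum>e\<in>UNIV. \<Sum>f\<in>UNIV. F a b c d e f x)"
    by (rule sum.cong[OF refl], rule front6)
  also have "\<dots> = (\<Sum>x\<in>UNIV. \<Sum>a\<in>UNIV. \<Sum>b\<in>UNIV. \<Sum>c\<in>UNIV. \<Sum>d\<in>UNIV. \<Sum>e\<in>UNIV. \<Sum>f\<in>UNIV. F a b c d e f x)" by (rule sum.swap)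
  finally show ?thesis .
qed
lemma front8: "(\<Sum>a\<in>UNIV. \<Sum>b\<in>UNIV. \<Sum>c\<in>UNIV. \<Sum>d\<in>UNIV. \<Sum>e\<in>UNIV. \<Sum>f\<in>UNIV. \<Sum>g\<in>UNIV. \<Sum>x\<in>UNIV. F a b c d e f g x) = (\<Sum>x\<in>UNIV. \<Sum>a\<in>UNIV. \<Sum>b\<in>UNIV. \<Sum>c\<in>UNIV. \<Sum>d\<in>UNIV. \<Sum>e\<in>UNIV. \<Sum>f\<in>UNIV. \<Sum>g\<in>UNIV. F a b c d e f g x)"
proof -
  have "(\<Sum>a\<in>UNIV. \<Sum>b\<in>UNIV. \<Sum>c\<in>UNIV. \<Sum>d\<in>UNIV. \<Sum>e\<in>UNIV. \<Sum>f\<in>UNIV. \<Sum>g\<in>UNIV. \<Sum>x\<in>UNIV. F a b c d e f g x) = (\<Sum>a\<in>UNIV. \<Sum>x\<in>UNIV. \<Sum>b\<in>UNIV. \<Sum>c\<in>UNIV. \<Sum>d\<in>UNIV. \<Sum>e\<in>UNIV. \<Sum>f\<in>UNIV. \<Sum>g\<in>UNIV. F a b c d e f g x)"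
    by (rule sum.cong[OF refl], rule front7)
  also have "\<dots> = (\<Sum>x\<in>UNIV. \<Sum>a\<in>UNIV. \<Sum>b\<in>UNIV. \<Sum>c\<in>UNIV. \<Sum>d\<in>UNIV. \<Sum>e\<in>UNIV. \<Sum>f\<in>UNIV. \<Sum>g\<in>UNIV. F a b c d e f g x)" by (rule sum.swap)
  finally show ?thesis .
qed

lemma CL2: fixes R :: "real^7^7" assumes "orthogonal_matrix R"
  shows "(\<Sum>c\<in>UNIV. \<Sum>j\<in>UNIV. R$b$j * R$c$j * F c) = (F b :: real)"
proof -
  have "(\<Sum>c\<in>UNIV. \<Sum>j\<in>UNIV. R$b$j * R$c$j * F c) = (\<Sum>c\<in>UNIV. (\<Sum>j\<in>UNIV. R$b$j * R$c$j) * F c)"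
    by (simp add: sum_distrib_right)
  also have "\<dots> = F b" by (simp only: orth2[OF assms] delta_sum1)
  finally show ?thesis .
qed
lemma CL1: fixes R :: "real^7^7" assumes "orthogonal_matrix R"
  shows "(\<Sum>j\<in>UNIV. \<Sum>a\<in>UNIV. R$a$i * R$a$j * F j) = (F i :: real)"
proof -
  have "(\<Sum>j\<in>UNIV. \<Sum>a\<in>UNIV. R$a$i * R$a$j * F j) = (\<Sum>j\<in>UNIV. (\<Sum>a\<in>UNIV. R$a$i * R$a$j) * F j)"
    by (simp add: sum_distrib_right)
  also have "\<dots> = F i" by (simp only: orth1[OF assms] delta_sum1)
  finally show ?thesis .
qed

lemma contr3_pull: assumes O: "orthogonal_matrix R"
  shows "push2 R (contr3 X (pull3 R g)) a b = contr3 (R *v X) g a b"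
proof -
  have "push2 R (contr3 X (pull3 R g)) a b =
    (\<Sum>a'\<in>UNIV. \<Sum>x\<in>UNIV. R$a'$x * X$x * (\<Sum>b'\<in>UNIV. \<Sum>i\<in>UNIV. R$a$i * R$b'$i * (\<Sum>c'\<in>UNIV. \<Sum>j\<in>UNIV. R$b$j * R$c'$j * g a' b' c')))"
    apply (simp add: push2_def contr3_def pull3_def sum_distrib_left sum_distrib_right mult_ac)
    apply (rule trans[OF sum.swap], rule trans[OF front6], rule trans[OF front3], rule trans[OF front6], rule trans[OF front5], rule trans[OF front6])
    apply (rule refl)
    done
  also have "\<dots> = (\<Sum>a'\<in>UNIV. \<Sum>x\<in>UNIV. R$a'$x * X$x * g a' a b)"
    by (simp add: CL2[OF O])
  also have "\<dots> = contr3 (R *v X) g a b"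
    by (simp add: contr3_def matrix_vector_mult_def sum_distrib_right)
  finally show ?thesis .
qed


definition push3 :: "real^7^7 \<Rightarrow> form3 \<Rightarrow> form3" where
  "push3 R w a b c = (\<Sum>i\<in>UNIV. \<Sum>j\<in>UNIV. \<Sum>k\<in>UNIV. R$a$i * R$b$j * R$c$k * w i j k)"
definition Psi :: "real^7^7 \<Rightarrow> spinor \<Rightarrow> spinor" where
  "Psi R s = (fst s, transpose R *v snd s)"
definition Psi' :: "real^7^7 \<Rightarrow> spinor \<Rightarrow> spinor" where
  "Psi' R s = (fst s, R *v snd s)"

lemma lin_crossL: "linear (\<lambda>Y. cross7 g Y Z)"
  by (rule linearI) (simp_all add: cross7_def vec_eq_iff algebra_simps sum.distrib sum_distrib_left)
lemma lin_crossR: "linear (cross7 g Y)"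
  by (rule linearI) (simp_all add: cross7_def vec_eq_iff algebra_simps sum.distrib sum_distrib_left)
lemma lin_cliffY: "linear (\<lambda>Y. cliff g Y s)"
proof (rule linearI)
  fix Y1 Y2 show "cliff g (Y1 + Y2) s = cliff g Y1 s + cliff g Y2 s"
    using linear_add[OF lin_crossL[of g "snd s"]]
    by (simp add: cliff_def prod_eq_iff inner_add_left algebra_simps)
next
  fix r Y show "cliff g (r *\<^sub>R Y) s = r *\<^sub>R cliff g Y s"
    using linear_scale[OF lin_crossL[of g "snd s"]]
    by (simp add: cliff_def prod_eq_iff algebra_simps)
qed
lemma lin_cliffS: "linear (cliff g Y)"
proof (rule linearI)
  fix s1 s2 show "cliff g Y (s1 + s2) = cliff g Y s1 + cliff g Y s2"
    using linear_add[OF lin_crossR[of g Y]]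
    by (simp add: cliff_def prod_eq_iff inner_add_right algebra_simps)
next
  fix r s show "cliff g Y (r *\<^sub>R s) = r *\<^sub>R cliff g Y s"
    using linear_scale[OF lin_crossR[of g Y]]
    by (simp add: cliff_def prod_eq_iff algebra_simps)
qed
lemma lin_Psi: "linear (Psi R)"
  by (rule linearI) (simp_all add: Psi_def prod_eq_iff matrix_vector_right_distrib matrix_vector_mult_scaleR)

lemma Rv_e7: "R *v e7 i = (\<Sum>a\<in>UNIV. R$a$i *\<^sub>R e7 a)"
  by (simp add: vec_eq_iff matrix_vector_mult_def e7_def sum_component axis_def delta_sums)

lemma cross_pull: "cross7 (pull3 R g) Y Z = transpose R *v cross7 g (R *v Y) (R *v Z)"
proof -
  have "cross7 (pull3 R g) Y Z $ k = (transpose R *v cross7 g (R *v Y) (R *v Z)) $ k" for k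
    apply (simp add: cross7_def pull3_def matrix_vector_mult_def transpose_def sum_distrib_left sum_distrib_right mult_ac)
    apply (rule trans[OF sum.swap], rule trans[OF sum.swap], rule trans[OF front4], rule trans[OF front4], rule trans[OF front5])
    apply (simp add: mult_ac)
    done
  then show ?thesis by (simp add: vec_eq_iff)
qed


lemma ip_R: assumes O: "orthogonal_matrix (R::real^7^7)" shows "(R *v x) \<bullet> (R *v y) = x \<bullet> y"
proof -
  have "orthogonal_transformation (\<lambda>x. R *v x)" using orthogonal_transformation_matrix[of "\<lambda>x. R *v x"] O by simp
  then show ?thesis by (simp add: orthogonal_transformation_def)
qed
lemma RtR0: assumes O: "orthogonal_matrix (R::real^7^7)" shows "transpose R *v (R *v x) = x"
  using O by (simp only: matrix_vector_mul_assoc orthogonal_matrix_def) simp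
lemma RRt0: assumes O: "orthogonal_matrix (R::real^7^7)" shows "R *v (transpose R *v x) = x"
  using O by (simp only: matrix_vector_mul_assoc orthogonal_matrix_def) simp
lemma RtR: assumes O: "orthogonal_matrix (R::real^7^7)" shows "(R *v x) v* R = x"
  using RtR0[OF O, of x] by simp
lemma RRt: assumes O: "orthogonal_matrix (R::real^7^7)" shows "R *v (x v* R) = x"
  using RRt0[OF O, of x] by simp

lemma cliff_pull: assumes O: "orthogonal_matrix R"
  shows "cliff (pull3 R g) Y s = Psi R (cliff g (R *v Y) (Psi' R s))"
  by (simp add: cliff_def Psi_def Psi'_def ip_R[OF O] cross_pull matrix_vector_right_distrib matrix_vector_mult_scaleR RtR[OF O])

lemma PsiPsi': assumes O: "orthogonal_matrix R" shows "Psi' R (Psi R s) = s"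
  by (simp add: Psi_def Psi'_def RRt[OF O])

lemma GEN2: "(\<Sum>i\<in>UNIV. \<Sum>j\<in>UNIV. w i j *\<^sub>R (\<Sum>a\<in>UNIV. \<Sum>b\<in>UNIV. (R$a$i * R$b$j) *\<^sub>R F a b))
  = (\<Sum>a\<in>UNIV. \<Sum>b\<in>UNIV. (\<Sum>i\<in>UNIV. \<Sum>j\<in>UNIV. R$a$i * R$b$j * w i j) *\<^sub>R (F a b :: 'v::real_vector))"
  apply (simp add: scaleR_sum_right scaleR_sum_left)
  apply (rule trans[OF front4], rule trans[OF front4])
  apply (simp add: mult_ac)
  done

lemma GEN3: "(\<Sum>i\<in>UNIV. \<Sum>j\<in>UNIV. \<Sum>k\<in>UNIV. w i j k *\<^sub>R (\<Sum>a\<in>UNIV. \<Sum>b\<in>UNIV. \<Sum>c\<in>UNIV. (R$a$i * R$b$j * R$c$k) *\<^sub>R F a b c))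
  = (\<Sum>a\<in>UNIV. \<Sum>b\<in>UNIV. \<Sum>c\<in>UNIV. (\<Sum>i\<in>UNIV. \<Sum>j\<in>UNIV. \<Sum>k\<in>UNIV. R$a$i * R$b$j * R$c$k * w i j k) *\<^sub>R (F a b c :: 'v::real_vector))"
  apply (simp add: scaleR_sum_right scaleR_sum_left)
  apply (rule trans[OF front6], rule trans[OF front6], rule trans[OF front6])
  apply (simp add: mult_ac)
  done

lemma cliffY_e7: "cliff g (R *v e7 i) t = (\<Sum>a\<in>UNIV. R$a$i *\<^sub>R cliff g (e7 a) t)"
  by (simp add: Rv_e7 linear_sum[OF lin_cliffY] linear_scale[OF lin_cliffY])
lemma cliffS_sum: "cliff g Y (\<Sum>b\<in>UNIV. c b *\<^sub>R t b) = (\<Sum>b\<in>UNIV. c b *\<^sub>R cliff g Y (t b))"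
  by (simp add: linear_sum[OF lin_cliffS] linear_scale[OF lin_cliffS])
lemma Psi_sum: "Psi R (\<Sum>b\<in>UNIV. c b *\<^sub>R t b) = (\<Sum>b\<in>UNIV. c b *\<^sub>R Psi R (t b))"
  by (simp add: linear_sum[OF lin_Psi] linear_scale[OF lin_Psi])
lemma cliffS_sum0: "cliff g Y (sum f S) = (\<Sum>x\<in>S. cliff g Y (f x))"
  by (simp add: linear_sum[OF lin_cliffS])
lemma cliffS_scale: "cliff g Y (c *\<^sub>R t) = c *\<^sub>R cliff g Y t"
  by (simp add: linear_scale[OF lin_cliffS])
lemma Psi_sum0: "Psi R (sum f S) = (\<Sum>x\<in>S. Psi R (f x))"
  by (simp add: linear_sum[OF lin_Psi])
lemma Psi_scale: "Psi R (c *\<^sub>R t) = c *\<^sub>R Psi R t"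
  by (simp add: linear_scale[OF lin_Psi])

lemma act2_pull: assumes O: "orthogonal_matrix R"
  shows "act2 (pull3 R g) w s = Psi R (act2 g (push2 R w) (Psi' R s))"
proof -
  define s' where "s' = Psi' R s"
  define F where "F a b = cliff g (e7 a) (cliff g (e7 b) s')" for a b
  have inner: "cliff (pull3 R g) (e7 i) (cliff (pull3 R g) (e7 j) s) =
      Psi R (\<Sum>a\<in>UNIV. \<Sum>b\<in>UNIV. (R$a$i * R$b$j) *\<^sub>R F a b)" for i j
    apply (simp add: cliff_pull[OF O] PsiPsi'[OF O] s'_def[symmetric] F_def cliffY_e7 cliffS_sum0 cliffS_scale
        scaleR_sum_right)
    apply (rule arg_cong[where f="Psi R"])
    apply (rule trans[OF sum.swap])
    apply (simp add: mult_ac)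
    done
  have "act2 (pull3 R g) w s = (1/2) *\<^sub>R (\<Sum>i\<in>UNIV. \<Sum>j\<in>UNIV. w i j *\<^sub>R Psi R (\<Sum>a\<in>UNIV. \<Sum>b\<in>UNIV. (R$a$i * R$b$j) *\<^sub>R F a b))"
    by (simp add: act2_def inner)
  also have "\<dots> = Psi R ((1/2) *\<^sub>R (\<Sum>i\<in>UNIV. \<Sum>j\<in>UNIV. w i j *\<^sub>R (\<Sum>a\<in>UNIV. \<Sum>b\<in>UNIV. (R$a$i * R$b$j) *\<^sub>R F a b)))"
    by (simp only: Psi_scale Psi_sum0)
  also have "\<dots> = Psi R (act2 g (push2 R w) s')"
    by (simp only: GEN2 act2_def push2_def F_def)
  finally show ?thesis by (simp add: s'_def)
qed

lemma act3_pull: assumes O: "orthogonal_matrix R"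
  shows "act3 (pull3 R g) w s = Psi R (act3 g (push3 R w) (Psi' R s))"
proof -
  define s' where "s' = Psi' R s"
  define F where "F a b c = cliff g (e7 a) (cliff g (e7 b) (cliff g (e7 c) s'))" for a b c
  have inner: "cliff (pull3 R g) (e7 i) (cliff (pull3 R g) (e7 j) (cliff (pull3 R g) (e7 k) s)) =
      Psi R (\<Sum>a\<in>UNIV. \<Sum>b\<in>UNIV. \<Sum>c\<in>UNIV. (R$a$i * R$b$j * R$c$k) *\<^sub>R F a b c)" for i j k
    apply (simp add: cliff_pull[OF O] PsiPsi'[OF O] s'_def[symmetric] F_def cliffY_e7 cliffS_sum0 cliffS_scale
        scaleR_sum_right)
    apply (rule arg_cong[where f="Psi R"])
    apply (rule trans[OF sum.swap], rule trans[OF front3])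
    apply (simp add: mult_ac)
    done
  have "act3 (pull3 R g) w s = (1/6) *\<^sub>R (\<Sum>i\<in>UNIV. \<Sum>j\<in>UNIV. \<Sum>k\<in>UNIV. w i j k *\<^sub>R Psi R (\<Sum>a\<in>UNIV. \<Sum>b\<in>UNIV. \<Sum>c\<in>UNIV. (R$a$i * R$b$j * R$c$k) *\<^sub>R F a b c))"
    by (simp add: act3_def inner)
  also have "\<dots> = Psi R ((1/6) *\<^sub>R (\<Sum>i\<in>UNIV. \<Sum>j\<in>UNIV. \<Sum>k\<in>UNIV. w i j k *\<^sub>R (\<Sum>a\<in>UNIV. \<Sum>b\<in>UNIV. \<Sum>c\<in>UNIV. (R$a$i * R$b$j * R$c$k) *\<^sub>R F a b c)))"
    by (simp only: Psi_scale Psi_sum0)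
  also have "\<dots> = Psi R (act3 g (push3 R w) s')"
    by (simp only: GEN3 act3_def push3_def F_def)
  finally show ?thesis by (simp add: s'_def)
qed


lemma DL: "det (\<chi> s. (f(r := (\<Sum>x\<in>UNIV. c x *s e7 x))) s) = (\<Sum>x\<in>UNIV. c x * det (\<chi> s. (f(r := e7 x)) s))"
proof -
  have "det (\<chi> s. (f(r := (\<Sum>x\<in>UNIV. c x *s e7 x))) s) = det (\<chi> s. if s = r then (\<Sum>x\<in>UNIV. c x *s e7 x) else f s)"
    by (simp add: fun_upd_def)
  also have "\<dots> = (\<Sum>x\<in>UNIV. det (\<chi> s. if s = r then c x *s e7 x else f s))"
    by (rule det_linear_row_sum[of UNIV r "\<lambda>i x. c x *s e7 x" f, simplified])
  also have "\<dots> = (\<Sum>x\<in>UNIV. c x * det (\<chi> s. if s = r then e7 x else f s))"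
    by (simp add: det_row_mul)
  also have "\<dots> = (\<Sum>x\<in>UNIV. c x * det (\<chi> s. (f(r := e7 x)) s))"
    by (simp add: fun_upd_def)
  finally show ?thesis .
qed

lemma row_exp: "(\<Sum>x\<in>UNIV. (R::real^7^7)$p$x *s e7 x) = R$p"
  by (simp add: vec_eq_iff e7_def sum_component axis_def delta_sums)
lemma col_exp: "(\<Sum>x\<in>UNIV. (R::real^7^7)$x$a *s e7 x) = transpose R $ a"
  by (simp add: vec_eq_iff e7_def sum_component axis_def delta_sums transpose_def)

lemma levi_det1: "levi7 (idx7 i j k a b c d) = det (\<chi> s. ((\<lambda>s. e7 (idx7 0 0 0 a b c d s))(2 := e7 k, 1 := e7 j, 0 := e7 i)) s)"
proof -
  have "(\<chi> r. axis (idx7 i j k a b c d r) (1::real)) = (\<chi> s. ((\<lambda>s. e7 (idx7 0 0 0 a b c d s))(2 := e7 k, 1 := e7 j, 0 := e7 i)) s)"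
    apply (simp add: vec_eq_iff)
    apply (intro allI) subgoal for s using exhaust_7[of s] by (auto simp: idx7_def e7_def)
    done
  then show ?thesis by (simp add: levi7_def)
qed
lemma levi_det2: "levi7 (idx7 p q r a b c d) = det (\<chi> s. ((\<lambda>s. e7 (idx7 p q r 0 0 0 0 s))(6 := e7 d, 5 := e7 c, 4 := e7 b, 3 := e7 a)) s)"
proof -
  have "(\<chi> s. axis (idx7 p q r a b c d s) (1::real)) = (\<chi> s. ((\<lambda>s. e7 (idx7 p q r 0 0 0 0 s))(6 := e7 d, 5 := e7 c, 4 := e7 b, 3 := e7 a)) s)"
    apply (simp add: vec_eq_iff)
    apply (intro allI) subgoal for s using exhaust_7[of s] by (auto simp: idx7_def e7_def)
    done
  then show ?thesis by (simp add: levi7_def)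
qed

lemma K_left: fixes R :: "real^7^7" shows
  "(\<Sum>i\<in>UNIV. \<Sum>j\<in>UNIV. \<Sum>k\<in>UNIV. R$p$i * R$q$j * R$r$k * levi7 (idx7 i j k a b c d))
   = det (\<chi> s. ((\<lambda>s. e7 (idx7 0 0 0 a b c d s))(2 := R$r, 1 := R$q, 0 := R$p)) s)"
proof -
  define B where "B = (\<lambda>s. e7 (idx7 0 0 0 a b c d s))"
  have "(\<Sum>i\<in>UNIV. \<Sum>j\<in>UNIV. \<Sum>k\<in>UNIV. R$p$i * R$q$j * R$r$k * levi7 (idx7 i j k a b c d))
     = (\<Sum>i\<in>UNIV. R$p$i * (\<Sum>j\<in>UNIV. R$q$j * (\<Sum>k\<in>UNIV. R$r$k * det (\<chi> s. (B(2 := e7 k, 1 := e7 j, 0 := e7 i)) s))))"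
    by (simp add: levi_det1 B_def sum_distrib_left mult.assoc)
  also have "\<dots> = (\<Sum>i\<in>UNIV. R$p$i * (\<Sum>j\<in>UNIV. R$q$j * (\<Sum>k\<in>UNIV. R$r$k * det (\<chi> s. ((B(1 := e7 j, 0 := e7 i))(2 := e7 k)) s))))"
    by (simp add: fun_upd_twist)
  also have "\<dots> = (\<Sum>i\<in>UNIV. R$p$i * (\<Sum>j\<in>UNIV. R$q$j * det (\<chi> s. ((B(1 := e7 j, 0 := e7 i))(2 := R$r)) s)))"
    by (simp only: DL[symmetric] row_exp)
  also have "\<dots> = (\<Sum>i\<in>UNIV. R$p$i * (\<Sum>j\<in>UNIV. R$q$j * det (\<chi> s. ((B(2 := R$r, 0 := e7 i))(1 := e7 j)) s)))"
    by (simp add: fun_upd_twist)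
  also have "\<dots> = (\<Sum>i\<in>UNIV. R$p$i * det (\<chi> s. ((B(2 := R$r, 0 := e7 i))(1 := R$q)) s))"
    by (simp only: DL[symmetric] row_exp)
  also have "\<dots> = (\<Sum>i\<in>UNIV. R$p$i * det (\<chi> s. ((B(2 := R$r, 1 := R$q))(0 := e7 i)) s))"
    by (simp add: fun_upd_twist)
  also have "\<dots> = det (\<chi> s. ((B(2 := R$r, 1 := R$q))(0 := R$p)) s)"
    by (simp only: DL[symmetric] row_exp)
  finally show ?thesis by (simp add: B_def)
qed


lemma K_right: fixes R :: "real^7^7" shows
  "(\<Sum>a'\<in>UNIV. \<Sum>b'\<in>UNIV. \<Sum>c'\<in>UNIV. \<Sum>d'\<in>UNIV. R$a'$a * R$b'$b * R$c'$c * R$d'$d * levi7 (idx7 p q r a' b' c' d'))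
   = det (\<chi> s. ((\<lambda>s. e7 (idx7 p q r 0 0 0 0 s))(6 := transpose R $ d, 5 := transpose R $ c, 4 := transpose R $ b, 3 := transpose R $ a)) s)"
proof -
  define B where "B = (\<lambda>s. e7 (idx7 p q r 0 0 0 0 s))"
  have "(\<Sum>a'\<in>UNIV. \<Sum>b'\<in>UNIV. \<Sum>c'\<in>UNIV. \<Sum>d'\<in>UNIV. R$a'$a * R$b'$b * R$c'$c * R$d'$d * levi7 (idx7 p q r a' b' c' d'))
     = (\<Sum>a'\<in>UNIV. R$a'$a * (\<Sum>b'\<in>UNIV. R$b'$b * (\<Sum>c'\<in>UNIV. R$c'$c * (\<Sum>d'\<in>UNIV. R$d'$d * det (\<chi> s. (B(6 := e7 d', 5 := e7 c', 4 := e7 b', 3 := e7 a')) s)))))"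
    by (simp add: levi_det2 B_def sum_distrib_left mult.assoc)
  also have "\<dots> = (\<Sum>a'\<in>UNIV. R$a'$a * (\<Sum>b'\<in>UNIV. R$b'$b * (\<Sum>c'\<in>UNIV. R$c'$c * (\<Sum>d'\<in>UNIV. R$d'$d * det (\<chi> s. ((B(5 := e7 c', 4 := e7 b', 3 := e7 a'))(6 := e7 d')) s)))))"
    by (simp add: fun_upd_twist)
  also have "\<dots> = (\<Sum>a'\<in>UNIV. R$a'$a * (\<Sum>b'\<in>UNIV. R$b'$b * (\<Sum>c'\<in>UNIV. R$c'$c * det (\<chi> s. ((B(5 := e7 c', 4 := e7 b', 3 := e7 a'))(6 := transpose R $ d)) s))))"
    by (simp only: DL[symmetric] col_exp)
  also have "\<dots> = (\<Sum>a'\<in>UNIV. R$a'$a * (\<Sum>b'\<in>UNIV. R$b'$b * (\<Sum>c'\<in>UNIV. R$c'$c * det (\<chi> s. ((B(6 := transpose R $ d, 4 := e7 b', 3 := e7 a'))(5 := e7 c')) s))))"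
    by (simp add: fun_upd_twist)
  also have "\<dots> = (\<Sum>a'\<in>UNIV. R$a'$a * (\<Sum>b'\<in>UNIV. R$b'$b * det (\<chi> s. ((B(6 := transpose R $ d, 4 := e7 b', 3 := e7 a'))(5 := transpose R $ c)) s)))"
    by (simp only: DL[symmetric] col_exp)
  also have "\<dots> = (\<Sum>a'\<in>UNIV. R$a'$a * (\<Sum>b'\<in>UNIV. R$b'$b * det (\<chi> s. ((B(6 := transpose R $ d, 5 := transpose R $ c, 3 := e7 a'))(4 := e7 b')) s)))"
    by (simp add: fun_upd_twist)
  also have "\<dots> = (\<Sum>a'\<in>UNIV. R$a'$a * det (\<chi> s. ((B(6 := transpose R $ d, 5 := transpose R $ c, 3 := e7 a'))(4 := transpose R $ b)) s))"
    by (simp only: DL[symmetric] col_exp)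
  also have "\<dots> = (\<Sum>a'\<in>UNIV. R$a'$a * det (\<chi> s. ((B(6 := transpose R $ d, 5 := transpose R $ c, 4 := transpose R $ b))(3 := e7 a')) s))"
    by (simp add: fun_upd_twist)
  also have "\<dots> = det (\<chi> s. ((B(6 := transpose R $ d, 5 := transpose R $ c, 4 := transpose R $ b))(3 := transpose R $ a)) s)"
    by (simp only: DL[symmetric] col_exp)
  finally show ?thesis by (simp add: B_def)
qed

lemma K: fixes R :: "real^7^7" assumes O: "orthogonal_matrix R" shows
  "det R * (\<Sum>i\<in>UNIV. \<Sum>j\<in>UNIV. \<Sum>k\<in>UNIV. R$p$i * R$q$j * R$r$k * levi7 (idx7 i j k a b c d))
   = (\<Sum>a'\<in>UNIV. \<Sum>b'\<in>UNIV. \<Sum>c'\<in>UNIV. \<Sum>d'\<in>UNIV. R$a'$a * R$b'$b * R$c'$c * R$d'$d * levi7 (idx7 p q r a' b' c' d'))"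
proof -
  define M1 where "M1 = (\<chi> s. ((\<lambda>s. e7 (idx7 0 0 0 a b c d s))(2 := R$r, 1 := R$q, 0 := R$p)) s)"
  define M2 where "M2 = (\<chi> s. ((\<lambda>s. e7 (idx7 p q r 0 0 0 0 s))(6 := transpose R $ d, 5 := transpose R $ c, 4 := transpose R $ b, 3 := transpose R $ a)) s)"
  have prod: "M2 ** R = M1"
  proof -
    have "(M2 ** R) $ s $ t = M1 $ s $ t" for s t
      using exhaust_7[of s]
      by (auto simp: M1_def M2_def matrix_matrix_mult_def idx7_def e7_def axis_def transpose_def delta_sums orth1[OF O])
    then show ?thesis by (simp add: vec_eq_iff)
  qed
  have dR: "det R * det R = 1"
    using det_orthogonal_matrix[OF O] by auto
  have "det R * det M1 = det M2"
    using dR by (simp add: prod[symmetric] det_mul algebra_simps)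
  then show ?thesis by (simp add: K_left K_right M1_def M2_def)
qed


definition pull4 :: "real^7^7 \<Rightarrow> form4 \<Rightarrow> form4" where
  "pull4 R w i j k l = (\<Sum>a\<in>UNIV. \<Sum>b\<in>UNIV. \<Sum>c\<in>UNIV. \<Sum>d\<in>UNIV. R$a$i * R$b$j * R$c$k * R$d$l * w a b c d)"

lemma hodge_pull: fixes R :: "real^7^7" assumes O: "orthogonal_matrix R"
  shows "hodge3 (det R) (pull3 R g) a b c d = pull4 R (hodge3 1 g) a b c d"
proof -
  have "hodge3 (det R) (pull3 R g) a b c d = 1/6 * (\<Sum>p\<in>UNIV. \<Sum>q\<in>UNIV. \<Sum>r\<in>UNIV. g p q r *
      (det R * (\<Sum>i\<in>UNIV. \<Sum>j\<in>UNIV. \<Sum>k\<in>UNIV. R$p$i * R$q$j * R$r$k * levi7 (idx7 i j k a b c d))))"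
    apply (simp add: hodge3_def pull3_def sum_distrib_left sum_distrib_right mult_ac)
    apply (rule trans[OF front6], rule trans[OF front6], rule trans[OF front6])
    apply (simp add: mult_ac)
    done
  also have "\<dots> = 1/6 * (\<Sum>p\<in>UNIV. \<Sum>q\<in>UNIV. \<Sum>r\<in>UNIV. g p q r *
      (\<Sum>a'\<in>UNIV. \<Sum>b'\<in>UNIV. \<Sum>c'\<in>UNIV. \<Sum>d'\<in>UNIV. R$a'$a * R$b'$b * R$c'$c * R$d'$d * levi7 (idx7 p q r a' b' c' d')))"
    by (simp only: K[OF O])
  also have "\<dots> = pull4 R (hodge3 1 g) a b c d"
    apply (simp add: hodge3_def pull4_def sum_distrib_left sum_distrib_right mult_ac)
    apply (rule trans[OF front7], rule trans[OF front7], rule trans[OF front7], rule trans[OF front7])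
    apply (simp add: mult_ac)
    done
  finally show ?thesis .
qed


lemma contr4_pull: fixes R :: "real^7^7" assumes O: "orthogonal_matrix R"
  shows "push3 R (contr4 X (pull4 R g)) a b c = contr4 (R *v X) g a b c"
proof -
  have "push3 R (contr4 X (pull4 R g)) a b c =
    (\<Sum>a'\<in>UNIV. \<Sum>x\<in>UNIV. R$a'$x * X$x * (\<Sum>b'\<in>UNIV. \<Sum>i\<in>UNIV. R$a$i * R$b'$i * (\<Sum>c'\<in>UNIV. \<Sum>j\<in>UNIV. R$b$j * R$c'$j * (\<Sum>d'\<in>UNIV. \<Sum>k\<in>UNIV. R$c$k * R$d'$k * g a' b' c' d'))))"
    apply (simp add: push3_def contr4_def pull4_def sum_distrib_left sum_distrib_right mult_ac)
    apply (rule trans[OF front3], rule trans[OF front8], rule trans[OF front4], rule trans[OF front8], rule trans[OF front5], rule trans[OF front8], rule trans[OF front7], rule trans[OF front8])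
    apply (simp add: mult_ac)
    done
  also have "\<dots> = (\<Sum>a'\<in>UNIV. \<Sum>x\<in>UNIV. R$a'$x * X$x * g a' a b c)"
    by (simp add: CL2[OF O])
  also have "\<dots> = contr4 (R *v X) g a b c"
    by (simp add: contr4_def matrix_vector_mult_def sum_distrib_right)
  finally show ?thesis .
qed

lemma gamma_pull: fixes R :: "real^7^7" assumes O: "orthogonal_matrix R"
  shows "gamma_of (pull3 R g) h i j k = pull3 R (gamma_of g (push2 R h)) i j k"
proof -
  have e1: "h i p = (\<Sum>x\<in>UNIV. \<Sum>a\<in>UNIV. R$a$i * R$a$x * h x p)" for p using CL1[OF O, where F="\<lambda>x. h x p" and i=i] by simp
  have e2: "h j p = (\<Sum>x\<in>UNIV. \<Sum>a\<in>UNIV. R$a$j * R$a$x * h x p)" for p using CL1[OF O, where F="\<lambda>x. h x p" and i=j] by simp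
  have e3: "h k p = (\<Sum>x\<in>UNIV. \<Sum>a\<in>UNIV. R$a$k * R$a$x * h x p)" for p using CL1[OF O, where F="\<lambda>x. h x p" and i=k] by simp
  have P1: "(\<Sum>p\<in>UNIV. h i p * pull3 R g p j k) = (\<Sum>a\<in>UNIV. \<Sum>b\<in>UNIV. \<Sum>c\<in>UNIV. R$a$i * R$b$j * R$c$k * (\<Sum>q\<in>UNIV. push2 R h a q * g q b c))"
    apply (simp only: e1)
    apply (simp add: pull3_def push2_def sum_distrib_left sum_distrib_right mult_ac)
    apply (rule trans[OF front5], rule trans[OF front3], rule trans[OF front5], rule trans[OF front5], rule trans[OF front6])
    apply (simp add: mult_ac)
    done
  have P2: "(\<Sum>p\<in>UNIV. h j p * pull3 R g i p k) = (\<Sum>a\<in>UNIV. \<Sum>b\<in>UNIV. \<Sum>c\<in>UNIV. R$a$i * R$b$j * R$c$k * (\<Sum>q\<in>UNIV. push2 R h b q * g a q c))"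
    apply (simp only: e2)
    apply (simp add: pull3_def push2_def sum_distrib_left sum_distrib_right mult_ac)
    apply (rule trans[OF front5], rule trans[OF front4], rule trans[OF front5], rule trans[OF front6], rule trans[OF front6])
    apply (simp add: mult_ac)
    done
  have P3: "(\<Sum>p\<in>UNIV. h k p * pull3 R g i j p) = (\<Sum>a\<in>UNIV. \<Sum>b\<in>UNIV. \<Sum>c\<in>UNIV. R$a$i * R$b$j * R$c$k * (\<Sum>q\<in>UNIV. push2 R h c q * g a b q))"
    apply (simp only: e3)
    apply (simp add: pull3_def push2_def sum_distrib_left sum_distrib_right mult_ac)
    apply (rule trans[OF front5], rule trans[OF front5], rule trans[OF front6], rule trans[OF front6], rule trans[OF front6])
    apply (simp add: mult_ac)
    done
  have "gamma_of (pull3 R g) h i j k = (\<Sum>p\<in>UNIV. h i p * pull3 R g p j k) + (\<Sum>p\<in>UNIV. h j p * pull3 R g i p k) + (\<Sum>p\<in>UNIV. h k p * pull3 R g i j p)"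
    by (simp add: gamma_of_def sum.distrib)
  also have "\<dots> = pull3 R (gamma_of g (push2 R h)) i j k"
    apply (simp only: P1 P2 P3)
    apply (simp add: pull3_def gamma_of_def sum.distrib distrib_left)
    done
  finally show ?thesis .
qed

lemma apply_h_pull: fixes R :: "real^7^7" assumes O: "orthogonal_matrix R"
  shows "R *v apply_h h X = apply_h (push2 R h) (R *v X)"
proof -
  have "apply_h (push2 R h) (R *v X) $ a = (\<Sum>i\<in>UNIV. \<Sum>j\<in>UNIV. R$a$i * h i j * (\<Sum>x\<in>UNIV. \<Sum>b\<in>UNIV. R$b$j * R$b$x * X$x))" for a
    apply (simp add: matrix_vector_mult_def apply_h_def push2_def sum_distrib_left sum_distrib_right mult_ac)
    apply (rule trans[OF front4], rule trans[OF front4], rule trans[OF front4])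
    apply (simp add: mult_ac)
    done
  also have "\<dots> a = (R *v apply_h h X) $ a" for a
    by (simp only: CL1[OF O]) (simp add: matrix_vector_mult_def apply_h_def sum_distrib_left mult_ac)
  finally show ?thesis by (simp add: vec_eq_iff)
qed

lemma push2_sym: assumes hs: "\<And>i j. h i j = h j i" shows "push2 R h a b = push2 R h b a"
proof -
  have "push2 R h a b = (\<Sum>j\<in>UNIV. \<Sum>i\<in>UNIV. R$a$i * R$b$j * h i j)" unfolding push2_def by (rule sum.swap)
  also have "\<dots> = push2 R h b a" unfolding push2_def by (simp add: hs mult_ac)
  finally show ?thesis .
qed

lemma push2_tr: fixes R :: "real^7^7" assumes O: "orthogonal_matrix R"
  shows "(\<Sum>a\<in>UNIV. push2 R h a a) = (\<Sum>i\<in>UNIV. h i i)"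
proof -
  have "(\<Sum>a\<in>UNIV. push2 R h a a) = (\<Sum>i\<in>UNIV. \<Sum>j\<in>UNIV. \<Sum>a\<in>UNIV. R$a$i * R$a$j * h i j)"
    apply (simp add: push2_def)
    apply (rule trans[OF front3], rule trans[OF front3])
    apply (simp add: mult_ac)
    done
  also have "\<dots> = (\<Sum>i\<in>UNIV. h i i)" by (simp add: CL1[OF O])
  finally show ?thesis .
qed

lemma Psi_neg: "Psi R (- s) = - Psi R s"
  by (simp add: linear_neg[OF lin_Psi])

lemma Psi'_zeta: "Psi' R zeta = zeta"
  by (simp add: Psi'_def zeta_def)

lemma cliff_zeta_pull: assumes O: "orthogonal_matrix R"
  shows "cliff (pull3 R phi0) V zeta = Psi R (cliff phi0 (R *v V) zeta)"
  by (simp add: cliff_pull[OF O] Psi'_zeta)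

theorem lemma5p4:
  fixes R :: "real^7^7" and X :: "real^7" and h :: "7 \<Rightarrow> 7 \<Rightarrow> real"
  assumes "orthogonal_matrix R"
  shows "act2 (pull3 R phi0) (contr3 X (pull3 R phi0)) zeta
           = 3 *\<^sub>R cliff (pull3 R phi0) X zeta
    \<and> ((\<forall>i j. h i j = h j i) \<and> (\<Sum>i\<in>UNIV. h i i) = 0 \<longrightarrow>
           act2 (pull3 R phi0) (contr3 X (gamma_of (pull3 R phi0) h)) zeta
             = 2 *\<^sub>R cliff (pull3 R phi0) (apply_h h X) zeta
         \<and> act3 (pull3 R phi0) (contr4 X (hodge3 (det R) (gamma_of (pull3 R phi0) h))) zeta
             = - 2 *\<^sub>R cliff (pull3 R phi0) (apply_h h X) zeta)"
proof -
  note O = assms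
  have A1: "act2 (pull3 R phi0) (contr3 X (pull3 R phi0)) zeta = 3 *\<^sub>R cliff (pull3 R phi0) X zeta"
  proof -
    have "push2 R (contr3 X (pull3 R phi0)) = contr3 (R *v X) phi0"
      by (intro ext) (rule contr3_pull[OF O])
    then have "act2 (pull3 R phi0) (contr3 X (pull3 R phi0)) zeta = Psi R (act2 phi0 (contr3 (R *v X) phi0) zeta)"
      by (simp add: act2_pull[OF O] Psi'_zeta)
    also have "\<dots> = 3 *\<^sub>R Psi R (cliff phi0 (R *v X) zeta)"
      by (simp add: core1 Psi_scale)
    also have "\<dots> = 3 *\<^sub>R cliff (pull3 R phi0) X zeta"
      by (simp add: cliff_zeta_pull[OF O])
    finally show ?thesis .
  qed
  have A23: "act2 (pull3 R phi0) (contr3 X (gamma_of (pull3 R phi0) h)) zeta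
             = 2 *\<^sub>R cliff (pull3 R phi0) (apply_h h X) zeta
         \<and> act3 (pull3 R phi0) (contr4 X (hodge3 (det R) (gamma_of (pull3 R phi0) h))) zeta
             = - 2 *\<^sub>R cliff (pull3 R phi0) (apply_h h X) zeta"
    if hs: "\<forall>i j. h i j = h j i" and ht: "(\<Sum>i\<in>UNIV. h i i) = 0"
  proof -
    define h' where "h' = push2 R h"
    have hs': "\<And>i j. h' i j = h' j i" unfolding h'_def using hs by (intro push2_sym) auto
    have ht': "(\<Sum>i\<in>UNIV. h' i i) = 0" unfolding h'_def using ht by (simp add: push2_tr[OF O])
    have G: "gamma_of (pull3 R phi0) h = pull3 R (gamma_of phi0 h')"
      unfolding h'_def by (intro ext) (rule gamma_pull[OF O])
    have C: "cliff (pull3 R phi0) (apply_h h X) zeta = Psi R (cliff phi0 (apply_h h' (R *v X)) zeta)"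
      by (simp add: cliff_zeta_pull[OF O] apply_h_pull[OF O] h'_def)
    have B2: "act2 (pull3 R phi0) (contr3 X (gamma_of (pull3 R phi0) h)) zeta
             = 2 *\<^sub>R cliff (pull3 R phi0) (apply_h h X) zeta"
    proof -
      have "push2 R (contr3 X (pull3 R (gamma_of phi0 h'))) = contr3 (R *v X) (gamma_of phi0 h')"
        by (intro ext) (rule contr3_pull[OF O])
      then have "act2 (pull3 R phi0) (contr3 X (gamma_of (pull3 R phi0) h)) zeta
          = Psi R (act2 phi0 (contr3 (R *v X) (gamma_of phi0 h')) zeta)"
        by (simp add: G act2_pull[OF O] Psi'_zeta)
      also have "\<dots> = 2 *\<^sub>R Psi R (cliff phi0 (apply_h h' (R *v X)) zeta)"
        by (simp add: core2[where h=h', OF hs' ht'] Psi_scale)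
      finally show ?thesis by (simp add: C)
    qed
    have B3: "act3 (pull3 R phi0) (contr4 X (hodge3 (det R) (gamma_of (pull3 R phi0) h))) zeta
             = - 2 *\<^sub>R cliff (pull3 R phi0) (apply_h h X) zeta"
    proof -
      have H: "hodge3 (det R) (gamma_of (pull3 R phi0) h) = pull4 R (hodge3 1 (gamma_of phi0 h'))"
        unfolding G by (intro ext) (rule hodge_pull[OF O])
      have "push3 R (contr4 X (pull4 R (hodge3 1 (gamma_of phi0 h')))) = contr4 (R *v X) (hodge3 1 (gamma_of phi0 h'))"
        by (intro ext) (rule contr4_pull[OF O])
      then have "act3 (pull3 R phi0) (contr4 X (hodge3 (det R) (gamma_of (pull3 R phi0) h))) zeta
          = Psi R (act3 phi0 (contr4 (R *v X) (hodge3 1 (gamma_of phi0 h'))) zeta)"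
        by (simp add: H act3_pull[OF O] Psi'_zeta)
      also have "\<dots> = (- 2) *\<^sub>R Psi R (cliff phi0 (apply_h h' (R *v X)) zeta)"
        by (simp add: core3[where h=h', OF hs' ht'] Psi_scale Psi_neg)
      finally show ?thesis by (simp add: C)
    qed
    show ?thesis using B2 B3 by blast
  qed
  show ?thesis using A1 A23 by blast
qed

end
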